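(* Let $\overline Q$ be an acyclic stable $n$-translation quiver with $n$-translation $\tau$ and finitely many $\tau$-orbits, and let $Q$ be a complete $\tau$-slice of $\overline Q$. Let $i,i_0$ be vertices of $Q$ different from a vertex $j$ of $Q$. (1) If $j$ is a sink of $Q$ and $w$ is a walk in $Q$ from $i_0$ to $i$ having $j$ as a sink, then there is a walk $w'$ in $s_j^-Q$ from $i_0$ to $i$ having $\tau j$ as a source such that $u_{i_0,w}(i)=u_{i_0,w'}(i)$. (2) If $j$ is a source of $Q$ and $w$ is a walk in $Q$ from $i_0$ to $i$ having $j$ as a source, then there is a walk $w'$ in $s_j^+Q$ from $i_0$ to $i$ having $\tau^{-1}j$ as a sink such that $u_{i_0,w}(i)=u_{i_0,w'}(i)$.
   Context: $k$ is a field. Bound quivers have relations that are linear combinations of paths of equal length $\ge2$ with common source and target; paths are composed right to left; $s(p),t(p),l(p)$ denote source, target, length; bound paths are paths with nonzero image in the quotient algebra. A stable $n$-translation quiver is the bound quiver of a graded self-injective algebra of Loewy length $n+2$ (generated in degrees $0,1$) with the bijection $\tau$ on vertices induced by the Nakayama permutation; each bound path of length $n+1$ goes from $\tau i$ to $i$ for some $i$. If $\overline Q$ is acyclic with finitely many $\tau$-orbits, a complete $\tau$-slice is a full subquiver $Q$ which meets each $\tau$-orbit in exactly one vertex and is convex (every path of $\overline Q$ between vertices of $Q$ lies in $Q$), with the relations of $\overline Q$ all of whose paths lie in $Q$. For a sink $j$ of $Q$, the $\tau$-mutation $s_j^-Q$ is the full subquiver of $\overline Q$ on $(Q_0\setminus\{j\})\cup\{\tau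 j\}$; for a source $j$, $s_j^+Q$ is the full subquiver on $(Q_0\setminus\{j\})\cup\{\tau^{-1}j\}$. A walk from $a$ to $b$ is a sequence $w=(p_0,\dots,p_r)$ of paths with $l(p_h)>0$ for $0<h<r$, $t(p_{2h})=t(p_{2h+1})$, $s(p_{2h+1})=s(p_{2h+2})$, $s(p_0)=a$, ending at $b=t(p_r)$ ($r$ even) or $s(p_r)$ ($r$ odd); its sinks are the vertices $t(p_{2h})=t(p_{2h+1})$ and its sources the vertices $s(p_{2h+1})=s(p_{2h+2})$. Its grade is $u_{a,w}(b)=\sum_h(-1)^hl(p_h)$. *)

theory Defs
  imports Main
begin

text \<open>A path is a pair (starting vertex, list of arrows in the order in which they are traversed);
the trivial path at v is (v, []). Composition q \<circ> r (r first, then q; paths composed right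
to left) is pcomp q r.\<close>

type_synonym ('v,'a) path = "'v \<times> 'a list"

definition psrc :: "('v,'a) path \<Rightarrow> 'v" where
  "psrc p = fst p"

definition ptgt :: "('a \<Rightarrow> 'v) \<Rightarrow> ('v,'a) path \<Rightarrow> 'v" where
  "ptgt t p = (if snd p = [] then fst p else t (last (snd p)))"

definition plen :: "('v,'a) path \<Rightarrow> nat" where
  "plen p = length (snd p)"

fun chain :: "('a \<Rightarrow> 'v) \<Rightarrow> ('a \<Rightarrow> 'v) \<Rightarrow> 'v \<Rightarrow> 'a list \<Rightarrow> bool" where
  "chain s t v [] = True"
| "chain s t v (a # as) = (s a = v \<and> chain s t (t a) as)"

definition is_path :: "'v set \<Rightarrow> 'a set \<Rightarrow> ('a \<Rightarrow> 'v) \<Rightarrow> ('a \<Rightarrow> 'v) \<Rightarrow> ('v,'a) path \<Rightarrow> bool" where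
  "is_path V Arr s t p \<longleftrightarrow> fst p \<in> V \<and> set (snd p) \<subseteq> Arr \<and> chain s t (fst p) (snd p)"

definition pverts :: "('a \<Rightarrow> 'v) \<Rightarrow> ('v,'a) path \<Rightarrow> 'v set" where
  "pverts t p = insert (fst p) (t ` set (snd p))"

definition pcomp :: "('v,'a) path \<Rightarrow> ('v,'a) path \<Rightarrow> ('v,'a) path" where
  "pcomp q r = (fst r, snd r @ snd q)"

text \<open>Elements of the path algebra kQ: finitely supported k-valued functions on paths.\<close>

definition is_elem :: "'v set \<Rightarrow> 'a set \<Rightarrow> ('a \<Rightarrow> 'v) \<Rightarrow> ('a \<Rightarrow> 'v)
    \<Rightarrow> (('v,'a) path \<Rightarrow> 'k::field) \<Rightarrow> bool" where
  "is_elem V Arr s t x \<longleftrightarrow> finite {p. x p \<noteq> 0} \<and> (\<forall>p. x p \<noteq> 0 \<longrightarrow> is_path V Arr s t p)"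

definition pmult :: "'v set \<Rightarrow> 'a set \<Rightarrow> ('a \<Rightarrow> 'v) \<Rightarrow> ('a \<Rightarrow> 'v)
    \<Rightarrow> (('v,'a) path \<Rightarrow> 'k::field) \<Rightarrow> (('v,'a) path \<Rightarrow> 'k) \<Rightarrow> (('v,'a) path \<Rightarrow> 'k)" where
  "pmult V Arr s t x y = (\<lambda>w. \<Sum>(q,r) \<in> {(q,r). is_path V Arr s t q \<and> is_path V Arr s t r
        \<and> ptgt t r = psrc q \<and> pcomp q r = w}. x q * y r)"

definition single :: "('v,'a) path \<Rightarrow> (('v,'a) path \<Rightarrow> 'k::field)" where
  "single p = (\<lambda>w. if w = p then 1 else 0)"

definition is_relation :: "'v set \<Rightarrow> 'a set \<Rightarrow> ('a \<Rightarrow> 'v) \<Rightarrow> ('a \<Rightarrow> 'v)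
    \<Rightarrow> (('v,'a) path \<Rightarrow> 'k::field) \<Rightarrow> bool" where
  "is_relation V Arr s t x \<longleftrightarrow> is_elem V Arr s t x \<and>
     (\<exists>a b l. l \<ge> 2 \<and> (\<forall>p. x p \<noteq> 0 \<longrightarrow> psrc p = a \<and> ptgt t p = b \<and> plen p = l))"

inductive_set rel_ideal :: "'v set \<Rightarrow> 'a set \<Rightarrow> ('a \<Rightarrow> 'v) \<Rightarrow> ('a \<Rightarrow> 'v)
    \<Rightarrow> (('v,'a) path \<Rightarrow> 'k::field) set \<Rightarrow> (('v,'a) path \<Rightarrow> 'k) set"
  for V Arr s t \<rho> where
  zero: "(\<lambda>_. 0) \<in> rel_ideal V Arr s t \<rho>"
| step: "x \<in> rel_ideal V Arr s t \<rho> \<Longrightarrow> r \<in> \<rho> \<Longrightarrow> is_elem V Arr s t a \<Longrightarrow> is_elem V Arr s t b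
         \<Longrightarrow> (\<lambda>w. x w + pmult V Arr s t a (pmult V Arr s t r b) w) \<in> rel_ideal V Arr s t \<rho>"

definition bound_path :: "'v set \<Rightarrow> 'a set \<Rightarrow> ('a \<Rightarrow> 'v) \<Rightarrow> ('a \<Rightarrow> 'v)
    \<Rightarrow> (('v,'a) path \<Rightarrow> 'k::field) set \<Rightarrow> ('v,'a) path \<Rightarrow> bool" where
  "bound_path V Arr s t \<rho> p \<longleftrightarrow> is_path V Arr s t p \<and> (single p :: ('v,'a) path \<Rightarrow> 'k) \<notin> rel_ideal V Arr s t \<rho>"

definition hom_part :: "'v set \<Rightarrow> 'a set \<Rightarrow> ('a \<Rightarrow> 'v) \<Rightarrow> ('a \<Rightarrow> 'v)
    \<Rightarrow> 'v \<Rightarrow> 'v \<Rightarrow> nat \<Rightarrow> (('v,'a) path \<Rightarrow> 'k::field) set" where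
  "hom_part V Arr s t i j d = {x. is_elem V Arr s t x \<and>
     (\<forall>p. x p \<noteq> 0 \<longrightarrow> psrc p = i \<and> ptgt t p = j \<and> plen p = d)}"

text \<open>(V,Arr,s,t,\<rho>) is the bound quiver of a (locally bounded) graded self-injective algebra
\<Lambda> = kQ/(\<rho>) of Loewy length n+2 (graded by path length, hence generated in degrees 0,1),
and \<tau> is the bijection induced by the Nakayama permutation.  Graded self-injectivity is
expressed in the standard graded-Frobenius form: \<Lambda>_{n+2} = 0; for each vertex i the top
degree part \<Lambda>_{n+1} e_? ending in i is one-dimensional, spanned by a bound path from \<tau> i to i,
and every bound path of length n+1 ending at i starts at \<tau> i; and multiplication into
degree n+1 is nondegenerate on both sides (so the socle of every indecomposable projective,
left and right, is its simple degree n+1 part).\<close>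

definition stable_ntq :: "'v set \<Rightarrow> 'a set \<Rightarrow> ('a \<Rightarrow> 'v) \<Rightarrow> ('a \<Rightarrow> 'v)
    \<Rightarrow> (('v,'a) path \<Rightarrow> 'k::field) set \<Rightarrow> nat \<Rightarrow> ('v \<Rightarrow> 'v) \<Rightarrow> bool" where
  "stable_ntq V Arr s t \<rho> n \<tau> \<longleftrightarrow>
     (\<forall>\<alpha>\<in>Arr. s \<alpha> \<in> V \<and> t \<alpha> \<in> V)
   \<and> (\<forall>v\<in>V. finite {\<alpha>\<in>Arr. s \<alpha> = v} \<and> finite {\<alpha>\<in>Arr. t \<alpha> = v})
   \<and> (\<forall>r\<in>\<rho>. is_relation V Arr s t r)
   \<and> bij_betw \<tau> V V
   \<and> (\<forall>p. is_path V Arr s t p \<and> plen p = n + 2 \<longrightarrow> single p \<in> rel_ideal V Arr s t \<rho>)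
   \<and> (\<forall>p. bound_path V Arr s t \<rho> p \<and> plen p = n + 1 \<longrightarrow> psrc p = \<tau> (ptgt t p))
   \<and> (\<forall>i\<in>V. \<exists>p. bound_path V Arr s t \<rho> p \<and> plen p = n + 1 \<and> ptgt t p = i \<and>
        (\<forall>x\<in>hom_part V Arr s t (\<tau> i) i (n + 1).
           \<exists>c. (\<lambda>w. x w - c * single p w) \<in> rel_ideal V Arr s t \<rho>))
   \<and> (\<forall>i j d x. d \<le> n + 1 \<and> x \<in> hom_part V Arr s t i j d \<and> x \<notin> rel_ideal V Arr s t \<rho> \<longrightarrow>
        (\<exists>q. is_path V Arr s t q \<and> psrc q = j \<and> plen q = n + 1 - d \<and>
             pmult V Arr s t (single q) x \<notin> rel_ideal V Arr s t \<rho>)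
      \<and> (\<exists>p. is_path V Arr s t p \<and> ptgt t p = i \<and> plen p = n + 1 - d \<and>
             pmult V Arr s t x (single p) \<notin> rel_ideal V Arr s t \<rho>))"

definition acyclic_quiver :: "'v set \<Rightarrow> 'a set \<Rightarrow> ('a \<Rightarrow> 'v) \<Rightarrow> ('a \<Rightarrow> 'v) \<Rightarrow> bool" where
  "acyclic_quiver V Arr s t \<longleftrightarrow>
     (\<forall>p. is_path V Arr s t p \<and> plen p > 0 \<longrightarrow> psrc p \<noteq> ptgt t p)"

definition tau_inv :: "'v set \<Rightarrow> ('v \<Rightarrow> 'v) \<Rightarrow> 'v \<Rightarrow> 'v" where
  "tau_inv V \<tau> = inv_into V \<tau>"

definition tau_orbit :: "'v set \<Rightarrow> ('v \<Rightarrow> 'v) \<Rightarrow> 'v \<Rightarrow> 'v set" where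
  "tau_orbit V \<tau> i = {(\<tau> ^^ m) i | m. True} \<union> {(tau_inv V \<tau> ^^ m) i | m. True}"

definition complete_tau_slice :: "'v set \<Rightarrow> 'a set \<Rightarrow> ('a \<Rightarrow> 'v) \<Rightarrow> ('a \<Rightarrow> 'v)
    \<Rightarrow> ('v \<Rightarrow> 'v) \<Rightarrow> 'v set \<Rightarrow> bool" where
  "complete_tau_slice V Arr s t \<tau> S \<longleftrightarrow> S \<subseteq> V
     \<and> (\<forall>i\<in>V. \<exists>!x. x \<in> S \<and> x \<in> tau_orbit V \<tau> i)
     \<and> (\<forall>p. is_path V Arr s t p \<and> psrc p \<in> S \<and> ptgt t p \<in> S \<longrightarrow> pverts t p \<subseteq> S)"

definition is_sink_of :: "'a set \<Rightarrow> ('a \<Rightarrow> 'v) \<Rightarrow> ('a \<Rightarrow> 'v) \<Rightarrow> 'v set \<Rightarrow> 'v \<Rightarrow> bool" where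
  "is_sink_of Arr s t S j \<longleftrightarrow> j \<in> S \<and> \<not> (\<exists>\<alpha>\<in>Arr. s \<alpha> = j \<and> t \<alpha> \<in> S)"

definition is_source_of :: "'a set \<Rightarrow> ('a \<Rightarrow> 'v) \<Rightarrow> ('a \<Rightarrow> 'v) \<Rightarrow> 'v set \<Rightarrow> 'v \<Rightarrow> bool" where
  "is_source_of Arr s t S j \<longleftrightarrow> j \<in> S \<and> \<not> (\<exists>\<alpha>\<in>Arr. t \<alpha> = j \<and> s \<alpha> \<in> S)"

definition is_walk :: "'v set \<Rightarrow> 'a set \<Rightarrow> ('a \<Rightarrow> 'v) \<Rightarrow> ('a \<Rightarrow> 'v)
    \<Rightarrow> ('v,'a) path list \<Rightarrow> 'v \<Rightarrow> 'v \<Rightarrow> bool" where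
  "is_walk V Arr s t w a b \<longleftrightarrow> w \<noteq> []
     \<and> (\<forall>p\<in>set w. is_path V Arr s t p)
     \<and> (\<forall>h. 0 < h \<and> h < length w - 1 \<longrightarrow> plen (w ! h) > 0)
     \<and> (\<forall>h. 2 * h + 1 < length w \<longrightarrow> ptgt t (w ! (2 * h)) = ptgt t (w ! (2 * h + 1)))
     \<and> (\<forall>h. 2 * h + 2 < length w \<longrightarrow> psrc (w ! (2 * h + 1)) = psrc (w ! (2 * h + 2)))
     \<and> psrc (w ! 0) = a
     \<and> b = (if even (length w - 1) then ptgt t (last w) else psrc (last w))"

definition walk_in :: "'v set \<Rightarrow> 'a set \<Rightarrow> ('a \<Rightarrow> 'v) \<Rightarrow> ('a \<Rightarrow> 'v) \<Rightarrow> 'v set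
    \<Rightarrow> ('v,'a) path list \<Rightarrow> 'v \<Rightarrow> 'v \<Rightarrow> bool" where
  "walk_in V Arr s t S w a b \<longleftrightarrow> is_walk V Arr s t w a b \<and> (\<forall>p\<in>set w. pverts t p \<subseteq> S)"

definition walk_sinks :: "('a \<Rightarrow> 'v) \<Rightarrow> ('v,'a) path list \<Rightarrow> 'v set" where
  "walk_sinks t w = {ptgt t (w ! (2 * h)) | h. 2 * h + 1 < length w}"

definition walk_sources :: "('v,'a) path list \<Rightarrow> 'v set" where
  "walk_sources w = {psrc (w ! (2 * h + 1)) | h. 2 * h + 2 < length w}"

definition walk_grade :: "('v,'a) path list \<Rightarrow> int" where
  "walk_grade w = (\<Sum>h<length w. (-1) ^ h * int (plen (w ! h)))"

end

theory Submission
  imports Defs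
begin

lemma chain_append:
  "chain s t v (as @ bs) = (chain s t v as \<and> chain s t (ptgt t (v, as)) bs)"
  by (induction as arbitrary: v) (auto simp: ptgt_def)

lemma ptgt_Cons: "ptgt t (v, a # as) = ptgt t (t a, as)"
  by (simp add: ptgt_def)

lemma ptgt_in_pverts: "ptgt t p \<in> pverts t p"
  by (auto simp: ptgt_def pverts_def)

lemma psrc_pcomp[simp]: "psrc (pcomp q r) = psrc r"
  by (simp add: psrc_def pcomp_def)

lemma plen_pcomp[simp]: "plen (pcomp q r) = plen q + plen r"
  by (simp add: plen_def pcomp_def)

lemma ptgt_pcomp: "ptgt t r = psrc q \<Longrightarrow> ptgt t (pcomp q r) = ptgt t q"
  by (auto simp: ptgt_def psrc_def pcomp_def)

lemma pcomp_assoc: "pcomp q (pcomp r p) = pcomp (pcomp q r) p"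
  by (simp add: pcomp_def)

lemma is_path_pcomp:
  "is_path V Arr s t q \<Longrightarrow> is_path V Arr s t r \<Longrightarrow> ptgt t r = psrc q \<Longrightarrow> is_path V Arr s t (pcomp q r)"
  by (cases q, cases r) (auto simp: is_path_def pcomp_def chain_append psrc_def)

lemma pverts_pcomp:
  "ptgt t r = psrc q \<Longrightarrow> pverts t (pcomp q r) = pverts t q \<union> pverts t r"
  using ptgt_in_pverts[of t r]
  by (cases q, cases r) (auto simp: pverts_def pcomp_def psrc_def)

definition FF :: "'v set \<Rightarrow> 'a set \<Rightarrow> ('a \<Rightarrow> 'v) \<Rightarrow> ('a \<Rightarrow> 'v) \<Rightarrow> ('v,'a) path \<Rightarrow> (('v,'a) path \<times> ('v,'a) path) set" where
  "FF V Arr s t w = {(q,r). is_path V Arr s t q \<and> is_path V Arr s t r \<and> ptgt t r = psrc q \<and> pcomp q r = w}"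

lemma pmult_FF: "pmult V Arr s t x y w = (\<Sum>(q,r)\<in>FF V Arr s t w. x q * y r)"
  by (simp add: pmult_def FF_def)

lemma finite_FF: "finite (FF V Arr s t w)"
proof -
  have "FF V Arr s t w \<subseteq> (\<lambda>k. ((ptgt t (fst w, take k (snd w)), drop k (snd w)), (fst w, take k (snd w)))) ` {..length (snd w)}"
  proof
    fix x assume "x \<in> FF V Arr s t w"
    then obtain q r where x: "x = (q,r)" and "ptgt t r = psrc q" and "pcomp q r = w"
      by (auto simp: FF_def)
    then have "fst r = fst w" "snd w = snd r @ snd q" "fst q = ptgt t r"
      by (auto simp: pcomp_def psrc_def)
    then show "x \<in> (\<lambda>k. ((ptgt t (fst w, take k (snd w)), drop k (snd w)), (fst w, take k (snd w)))) ` {..length (snd w)}"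
      using x by (intro image_eqI[where x="length (snd r)"]) (auto simp: prod_eq_iff ptgt_def)
  qed
  then show ?thesis by (rule finite_subset) simp
qed

lemma FF_right_unique: "(q,p) \<in> FF V Arr s t w \<Longrightarrow> q = (ptgt t p, drop (plen p) (snd w))"
  by (cases q) (auto simp: FF_def pcomp_def psrc_def plen_def)

lemma FF_left_unique: "(q,r) \<in> FF V Arr s t w \<Longrightarrow> r = (fst w, take (plen w - plen q) (snd w))"
  by (cases r) (auto simp: FF_def pcomp_def psrc_def plen_def)

lemma pmult_single_right:
  "pmult V Arr s t x (single p) w =
    (if (\<exists>q. (q,p) \<in> FF V Arr s t w) then x (ptgt t p, drop (plen p) (snd w)) else 0)"
proof -
  let ?q0 = "(ptgt t p, drop (plen p) (snd w))"
  have "pmult V Arr s t x (single p) w = (\<Sum>z\<in>FF V Arr s t w. if snd z = p then x (fst z) else 0)"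
    by (simp add: pmult_FF single_def case_prod_beta if_distrib cong: if_cong)
  also have "\<dots> = (\<Sum>z\<in>FF V Arr s t w \<inter> {z. snd z = p}. x (fst z))"
    by (simp add: sum.inter_filter[OF finite_FF] Int_def)
  also have "FF V Arr s t w \<inter> {z. snd z = p} = (if (\<exists>q. (q,p) \<in> FF V Arr s t w) then {(?q0, p)} else {})"
  proof (cases "\<exists>q. (q,p) \<in> FF V Arr s t w")
    case True
    then obtain q where q: "(q,p) \<in> FF V Arr s t w" by blast
    then have "q = ?q0" by (rule FF_right_unique)
    with q True show ?thesis by (auto dest: FF_right_unique)
  next
    case False then show ?thesis by auto
  qed
  finally show ?thesis by simp
qed

lemma pmult_single_left:
  "pmult V Arr s t (single q) x w =
    (if (\<exists>r. (q,r) \<in> FF V Arr s t w) then x (fst w, take (plen w - plen q) (snd w)) else 0)"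
proof -
  let ?r0 = "(fst w, take (plen w - plen q) (snd w))"
  have "pmult V Arr s t (single q) x w = (\<Sum>z\<in>FF V Arr s t w. if fst z = q then x (snd z) else 0)"
    unfolding pmult_FF by (rule sum.cong) (auto simp: single_def)
  also have "\<dots> = (\<Sum>z\<in>FF V Arr s t w \<inter> {z. fst z = q}. x (snd z))"
    by (simp add: sum.inter_filter[OF finite_FF] Int_def)
  also have "FF V Arr s t w \<inter> {z. fst z = q} = (if (\<exists>r. (q,r) \<in> FF V Arr s t w) then {(q, ?r0)} else {})"
  proof (cases "\<exists>r. (q,r) \<in> FF V Arr s t w")
    case True
    then obtain r where r: "(q,r) \<in> FF V Arr s t w" by blast
    then have "r = ?r0" by (rule FF_left_unique)
    with r True show ?thesis by (auto dest: FF_left_unique)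
  next
    case False then show ?thesis by auto
  qed
  finally show ?thesis by simp
qed

lemma FF_iff: "(q,r) \<in> FF V Arr s t w \<longleftrightarrow> is_path V Arr s t q \<and> is_path V Arr s t r \<and> ptgt t r = psrc q \<and> pcomp q r = w"
  by (simp add: FF_def)

lemma pcomp_right_cancel: "pcomp q p = pcomp q' p \<Longrightarrow> fst q = fst q' \<Longrightarrow> q = q'"
  by (cases q, cases q') (auto simp: pcomp_def)

lemma pmult_assoc_right:
  "pmult V Arr s t (pmult V Arr s t a y) (single p) = pmult V Arr s t a (pmult V Arr s t y (single p))"
proof
  fix w
  let ?F = "FF V Arr s t"
  let ?D = "\<lambda>w. \<exists>q. (q,p) \<in> ?F w"
  let ?dv = "\<lambda>w. (ptgt t p, drop (plen p) (snd w))"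
  have R: "pmult V Arr s t a (pmult V Arr s t y (single p)) w =
      (\<Sum>z\<in>?F w. a (fst z) * (if ?D (snd z) then y (?dv (snd z)) else 0))"
    unfolding pmult_FF[of _ _ _ _ a] by (simp add: pmult_single_right case_prod_beta)
  show "pmult V Arr s t (pmult V Arr s t a y) (single p) w = pmult V Arr s t a (pmult V Arr s t y (single p)) w"
  proof (cases "?D w")
    case False
    have "a (fst z) * (if ?D (snd z) then y (?dv (snd z)) else 0) = 0" if z: "z \<in> ?F w" for z
    proof (cases "?D (snd z)")
      case True
      then obtain q' where q': "(q', p) \<in> ?F (snd z)" by blast
      obtain q r' where zz: "z = (q, r')" by (cases z)
      have zF: "(q, r') \<in> ?F w" using z zz by simp
      have "(pcomp q q', p) \<in> ?F w"
        using q' zF zz unfolding FF_iff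
        by (auto intro!: is_path_pcomp simp: ptgt_pcomp pcomp_assoc)
      with False show ?thesis by blast
    qed simp
    then have "pmult V Arr s t a (pmult V Arr s t y (single p)) w = 0"
      unfolding R by (intro sum.neutral) blast
    then show ?thesis using False by (simp add: pmult_single_right)
  next
    case True
    then obtain q0 where q0: "(q0, p) \<in> ?F w" by blast
    have q0e: "q0 = ?dv w" using FF_right_unique[OF q0] .
    have L: "pmult V Arr s t (pmult V Arr s t a y) (single p) w = (\<Sum>z\<in>?F q0. a (fst z) * y (snd z))"
    proof -
      have "pmult V Arr s t (pmult V Arr s t a y) (single p) w = pmult V Arr s t a y q0"
        using True q0e by (simp add: pmult_single_right)
      then show ?thesis by (simp add: pmult_FF case_prod_beta)
    qed
    have R2: "pmult V Arr s t a (pmult V Arr s t y (single p)) w =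
      (\<Sum>z\<in>?F w \<inter> {z. ?D (snd z)}. a (fst z) * y (?dv (snd z)))"
      unfolding R by (simp add: sum.inter_filter[OF finite_FF] if_distrib Int_def cong: if_cong)
    show ?thesis unfolding L R2
    proof (rule sum.reindex_bij_witness[where i = "\<lambda>z. (fst z, ?dv (snd z))" and j = "\<lambda>z. (fst z, pcomp (snd z) p)"])
      fix z assume z: "z \<in> ?F q0"
      obtain q r where zz: "z = (q,r)" by (cases z)
      have fr: "fst r = ptgt t p" using z zz q0e by (auto simp: FF_iff pcomp_def)
      show "(fst (fst z, pcomp (snd z) p), ?dv (snd (fst z, pcomp (snd z) p))) = z"
        using zz fr by (cases r) (auto simp: pcomp_def plen_def)
      have rp: "(r, p) \<in> ?F (pcomp r p)" using z zz q0 fr by (auto simp: FF_iff psrc_def)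
      show "(fst z, pcomp (snd z) p) \<in> ?F w \<inter> {z. ?D (snd z)}"
      proof -
        have "(q, pcomp r p) \<in> ?F w"
          using z zz q0 fr by (auto simp: FF_iff intro!: is_path_pcomp simp: ptgt_pcomp pcomp_assoc psrc_def)
        moreover have "?D (pcomp r p)" using rp by blast
        ultimately show ?thesis using zz by simp
      qed
      show "a (fst (fst z, pcomp (snd z) p)) * y (?dv (snd (fst z, pcomp (snd z) p))) = a (fst z) * y (snd z)"
        using zz fr by (cases r) (simp add: pcomp_def plen_def)
    next
      fix z assume z: "z \<in> ?F w \<inter> {z. ?D (snd z)}"
      obtain q r' where zz: "z = (q,r')" by (cases z)
      from z zz obtain q' where q': "(q', p) \<in> ?F r'" by auto
      have q'e: "q' = ?dv r'" using FF_right_unique[OF q'] .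
      have zF: "(q, r') \<in> ?F w" using z zz by auto
      have "pcomp (pcomp q q') p = pcomp q0 p" using zF q0 q' by (auto simp: FF_iff pcomp_assoc)
      moreover have "fst (pcomp q q') = fst q0" using q' q0e by (auto simp: FF_iff pcomp_def psrc_def)
      ultimately have qq: "pcomp q q' = q0" by (rule pcomp_right_cancel)
      show "(fst (fst z, ?dv (snd z)), pcomp (snd (fst z, ?dv (snd z))) p) = z"
        using zz q' q'e by (auto simp: FF_iff)
      show "(fst z, ?dv (snd z)) \<in> ?F q0"
      proof -
        have "ptgt t q' = psrc q" using q' zF ptgt_pcomp[of t p q'] by (auto simp: FF_iff)
        then show ?thesis using zF zz q' q'e qq by (auto simp: FF_iff)
      qed
    qed
  qed
qed

lemma pcomp_left_cancel: "pcomp q x = pcomp q y \<Longrightarrow> x = y"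
  by (cases x, cases y) (auto simp: pcomp_def)

lemma pmult_assoc_left:
  "pmult V Arr s t (single q) (pmult V Arr s t a y) = pmult V Arr s t (pmult V Arr s t (single q) a) y"
proof
  fix w
  let ?F = "FF V Arr s t"
  let ?E = "\<lambda>w. \<exists>r. (q,r) \<in> ?F w"
  let ?lq = "\<lambda>w. (fst w, take (plen w - plen q) (snd w))"
  have R: "pmult V Arr s t (pmult V Arr s t (single q) a) y w =
      (\<Sum>z\<in>?F w. (if ?E (fst z) then a (?lq (fst z)) else 0) * y (snd z))"
    unfolding pmult_FF[of _ _ _ _ "pmult V Arr s t (single q) a"] by (simp add: pmult_single_left case_prod_beta)
  show "pmult V Arr s t (single q) (pmult V Arr s t a y) w = pmult V Arr s t (pmult V Arr s t (single q) a) y w"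
  proof (cases "?E w")
    case False
    have "(if ?E (fst z) then a (?lq (fst z)) else 0) * y (snd z) = 0" if z: "z \<in> ?F w" for z
    proof (cases "?E (fst z)")
      case True
      then obtain r' where r': "(q, r') \<in> ?F (fst z)" by blast
      obtain a'' r where zz: "z = (a'', r)" by (cases z)
      have zF: "(a'', r) \<in> ?F w" using z zz by simp
      have "(q, pcomp r' r) \<in> ?F w"
        using r' zF zz unfolding FF_iff
        by (auto intro!: is_path_pcomp simp: ptgt_pcomp pcomp_assoc)
      with False show ?thesis by blast
    qed simp
    then have "pmult V Arr s t (pmult V Arr s t (single q) a) y w = 0"
      unfolding R by (intro sum.neutral) blast
    then show ?thesis using False by (simp add: pmult_single_left)
  next
    case True
    then obtain r0 where r0: "(q, r0) \<in> ?F w" by blast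
    have r0e: "r0 = ?lq w" using FF_left_unique[OF r0] .
    have L: "pmult V Arr s t (single q) (pmult V Arr s t a y) w = (\<Sum>z\<in>?F r0. a (fst z) * y (snd z))"
    proof -
      have "pmult V Arr s t (single q) (pmult V Arr s t a y) w = pmult V Arr s t a y r0"
        using True r0e by (simp add: pmult_single_left)
      then show ?thesis by (simp add: pmult_FF case_prod_beta)
    qed
    have R2: "pmult V Arr s t (pmult V Arr s t (single q) a) y w =
      (\<Sum>z\<in>?F w \<inter> {z. ?E (fst z)}. a (?lq (fst z)) * y (snd z))"
    proof -
      have "pmult V Arr s t (pmult V Arr s t (single q) a) y w = (\<Sum>z\<in>?F w. if ?E (fst z) then a (?lq (fst z)) * y (snd z) else 0)"
        unfolding R by (rule sum.cong) auto
      also have "\<dots> = (\<Sum>z\<in>{z\<in>?F w. ?E (fst z)}. a (?lq (fst z)) * y (snd z))"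
        by (rule sum.inter_filter[symmetric, OF finite_FF])
      also have "{z\<in>?F w. ?E (fst z)} = ?F w \<inter> {z. ?E (fst z)}" by blast
      finally show ?thesis .
    qed
    show ?thesis unfolding L R2
    proof (rule sum.reindex_bij_witness[where i = "\<lambda>z. (?lq (fst z), snd z)" and j = "\<lambda>z. (pcomp q (fst z), snd z)"])
      fix z assume z: "z \<in> ?F r0"
      obtain a' r where zz: "z = (a',r)" by (cases z)
      have zF: "(a', r) \<in> ?F r0" using z zz by simp
      show "(?lq (fst (pcomp q (fst z), snd z)), snd (pcomp q (fst z), snd z)) = z"
        using zz by (cases a') (auto simp: pcomp_def plen_def)
      have ta: "ptgt t a' = psrc q" using zF r0 ptgt_pcomp[of t r a'] by (auto simp: FF_iff)
      have qa: "(q, a') \<in> ?F (pcomp q a')" using zF r0 ta by (auto simp: FF_iff)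
      show "(pcomp q (fst z), snd z) \<in> ?F w \<inter> {z. ?E (fst z)}"
      proof -
        have "(pcomp q a', r) \<in> ?F w"
          using zF r0 ta by (auto simp: FF_iff intro!: is_path_pcomp simp: pcomp_assoc)
        moreover have "?E (pcomp q a')" using qa by blast
        ultimately show ?thesis using zz by simp
      qed
      show "a (?lq (fst (pcomp q (fst z), snd z))) * y (snd (pcomp q (fst z), snd z)) = a (fst z) * y (snd z)"
        using zz by (cases a') (simp add: pcomp_def plen_def)
    next
      fix z assume z: "z \<in> ?F w \<inter> {z. ?E (fst z)}"
      obtain a'' r where zz: "z = (a'',r)" by (cases z)
      from z zz obtain r' where r': "(q, r') \<in> ?F a''" by auto
      have r'e: "r' = ?lq a''" using FF_left_unique[OF r'] .
      have zF: "(a'', r) \<in> ?F w" using z zz by auto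
      have "pcomp q (pcomp r' r) = pcomp q r0" using zF r0 r' by (auto simp: FF_iff pcomp_assoc)
      then have rr: "pcomp r' r = r0" by (rule pcomp_left_cancel)
      show "(pcomp q (fst (?lq (fst z), snd z)), snd (?lq (fst z), snd z)) = z"
        using zz r' r'e by (auto simp: FF_iff)
      show "(?lq (fst z), snd z) \<in> ?F r0"
        using zF zz r' r'e rr by (auto simp: FF_iff psrc_def)
    qed
  qed
qed

lemma pmult_add_left: "pmult V Arr s t (\<lambda>w. x w + y w) c = (\<lambda>w. pmult V Arr s t x c w + pmult V Arr s t y c w)"
  by (rule ext) (simp add: pmult_FF sum.distrib distrib_right case_prod_beta)

lemma pmult_add_right: "pmult V Arr s t c (\<lambda>w. x w + y w) = (\<lambda>w. pmult V Arr s t c x w + pmult V Arr s t c y w)"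
  by (rule ext) (simp add: pmult_FF sum.distrib distrib_left case_prod_beta)

lemma pmult_zero_left: "pmult V Arr s t (\<lambda>_. 0) c = (\<lambda>_. 0)"
  by (rule ext) (simp add: pmult_FF)

lemma pmult_zero_right: "pmult V Arr s t c (\<lambda>_. 0) = (\<lambda>_. 0)"
  by (rule ext) (simp add: pmult_FF)

lemma is_elem_mult_single_right:
  assumes "is_elem V Arr s t b"
  shows "is_elem V Arr s t (pmult V Arr s t b (single p))"
proof -
  have sup: "\<exists>q. (q,p) \<in> FF V Arr s t w \<and> b q \<noteq> 0" if nz: "pmult V Arr s t b (single p) w \<noteq> 0" for w
  proof -
    obtain q where q: "(q,p) \<in> FF V Arr s t w" and "b (ptgt t p, drop (plen p) (snd w)) \<noteq> 0"
      using nz by (auto simp: pmult_single_right split: if_splits)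
    then show ?thesis using FF_right_unique[OF q] by blast
  qed
  have "{w. pmult V Arr s t b (single p) w \<noteq> 0} \<subseteq> (\<lambda>q. pcomp q p) ` {q. b q \<noteq> 0}"
    using sup by (force simp: FF_iff)
  moreover have "finite {q. b q \<noteq> 0}" using assms by (simp add: is_elem_def)
  ultimately have "finite {w. pmult V Arr s t b (single p) w \<noteq> 0}" by (meson finite_imageI finite_subset)
  moreover have "is_path V Arr s t w" if "pmult V Arr s t b (single p) w \<noteq> 0" for w
    using sup[OF that] by (auto simp: FF_iff intro: is_path_pcomp)
  ultimately show ?thesis by (simp add: is_elem_def)
qed

lemma is_elem_mult_single_left:
  assumes "is_elem V Arr s t b"
  shows "is_elem V Arr s t (pmult V Arr s t (single q) b)"
proof -
  have sup: "\<exists>r. (q,r) \<in> FF V Arr s t w \<and> b r \<noteq> 0" if nz: "pmult V Arr s t (single q) b w \<noteq> 0" for w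
  proof -
    obtain r where r: "(q,r) \<in> FF V Arr s t w" and "b (fst w, take (plen w - plen q) (snd w)) \<noteq> 0"
      using nz by (auto simp: pmult_single_left split: if_splits)
    then show ?thesis using FF_left_unique[OF r] by blast
  qed
  have "{w. pmult V Arr s t (single q) b w \<noteq> 0} \<subseteq> (\<lambda>r. pcomp q r) ` {r. b r \<noteq> 0}"
    using sup by (force simp: FF_iff)
  moreover have "finite {r. b r \<noteq> 0}" using assms by (simp add: is_elem_def)
  ultimately have "finite {w. pmult V Arr s t (single q) b w \<noteq> 0}" by (meson finite_imageI finite_subset)
  moreover have "is_path V Arr s t w" if "pmult V Arr s t (single q) b w \<noteq> 0" for w
    using sup[OF that] by (auto simp: FF_iff intro: is_path_pcomp)
  ultimately show ?thesis by (simp add: is_elem_def)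
qed

lemma ideal_mult_right:
  assumes "x \<in> rel_ideal V Arr s t \<rho>"
  shows "pmult V Arr s t x (single p) \<in> rel_ideal V Arr s t \<rho>"
  using assms
proof induction
  case zero
  then show ?case by (simp add: pmult_zero_left rel_ideal.zero)
next
  case (step x r a b)
  have "pmult V Arr s t (\<lambda>w. x w + pmult V Arr s t a (pmult V Arr s t r b) w) (single p)
     = (\<lambda>w. pmult V Arr s t x (single p) w + pmult V Arr s t a (pmult V Arr s t r (pmult V Arr s t b (single p))) w)"
    by (simp add: pmult_add_left pmult_assoc_right)
  also have "\<dots> \<in> rel_ideal V Arr s t \<rho>"
    by (rule rel_ideal.step[OF step.IH step.hyps(2) step.hyps(3) is_elem_mult_single_right[OF step.hyps(4)]])
  finally show ?case .
qed

lemma ideal_mult_left: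
  assumes "x \<in> rel_ideal V Arr s t \<rho>"
  shows "pmult V Arr s t (single q) x \<in> rel_ideal V Arr s t \<rho>"
  using assms
proof induction
  case zero
  then show ?case by (simp add: pmult_zero_right rel_ideal.zero)
next
  case (step x r a b)
  have "pmult V Arr s t (single q) (\<lambda>w. x w + pmult V Arr s t a (pmult V Arr s t r b) w)
     = (\<lambda>w. pmult V Arr s t (single q) x w + pmult V Arr s t (pmult V Arr s t (single q) a) (pmult V Arr s t r b) w)"
    by (simp add: pmult_add_right pmult_assoc_left)
  also have "\<dots> \<in> rel_ideal V Arr s t \<rho>"
    by (rule rel_ideal.step[OF step.IH step.hyps(2) is_elem_mult_single_left[OF step.hyps(3)] step.hyps(4)])
  finally show ?case .
qed

lemma single_mult_single:
  "pmult V Arr s t (single q) (single p) =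
    (if is_path V Arr s t q \<and> is_path V Arr s t p \<and> ptgt t p = psrc q then single (pcomp q p) else (\<lambda>_. 0))"
proof
  fix w
  show "pmult V Arr s t (single q) (single p) w =
    (if is_path V Arr s t q \<and> is_path V Arr s t p \<and> ptgt t p = psrc q then single (pcomp q p) else (\<lambda>_. 0)) w"
  proof (cases "\<exists>q'. (q',p) \<in> FF V Arr s t w")
    case True
    then obtain q' where q': "(q',p) \<in> FF V Arr s t w" by blast
    have e: "q' = (ptgt t p, drop (plen p) (snd w))" using FF_right_unique[OF q'] .
    have L: "pmult V Arr s t (single q) (single p) w = single q q'"
      using True e by (simp add: pmult_single_right)
    show ?thesis
    proof (cases "q' = q")
      case True
      then show ?thesis using L q' by (auto simp: FF_iff single_def)
    next
      case False
      have "w \<noteq> pcomp q p" if "ptgt t p = psrc q"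
      proof
        assume "w = pcomp q p"
        then have "pcomp q' p = pcomp q p" using q' by (simp add: FF_iff)
        moreover have "fst q' = fst q" using q' that by (auto simp: FF_iff psrc_def)
        ultimately show False using False pcomp_right_cancel by blast
      qed
      then show ?thesis using L False by (auto simp: single_def)
    qed
  next
    case False
    have "w \<noteq> pcomp q p" if "is_path V Arr s t q \<and> is_path V Arr s t p \<and> ptgt t p = psrc q"
    proof
      assume "w = pcomp q p"
      then have "(q,p) \<in> FF V Arr s t w" using that by (simp add: FF_iff)
      then show False using False by blast
    qed
    moreover have "pmult V Arr s t (single q) (single p) w = 0"
      using False by (simp add: pmult_single_right)
    ultimately show ?thesis by (auto simp: single_def)
  qed
qed

lemma pmult_short_right:
  assumes "\<And>u. plen u < 2 \<Longrightarrow> y u = 0" "plen w < 2"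
  shows "pmult V Arr s t x y w = 0"
  unfolding pmult_FF
proof (rule sum.neutral, clarify)
  fix q r assume "(q,r) \<in> FF V Arr s t w"
  then have "plen r < 2" using assms(2) by (auto simp: FF_iff)
  then show "x q * y r = 0" using assms(1) by simp
qed

lemma pmult_short_left:
  assumes "\<And>u. plen u < 2 \<Longrightarrow> x u = 0" "plen w < 2"
  shows "pmult V Arr s t x y w = 0"
  unfolding pmult_FF
proof (rule sum.neutral, clarify)
  fix q r assume "(q,r) \<in> FF V Arr s t w"
  then have "plen q < 2" using assms(2) by (auto simp: FF_iff)
  then show "x q * y r = 0" using assms(1) by simp
qed

lemma ideal_short:
  assumes "x \<in> rel_ideal V Arr s t \<rho>" "\<forall>r\<in>\<rho>. is_relation V Arr s t r"
  shows "plen w < 2 \<Longrightarrow> x w = 0"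
  using assms(1)
proof (induction arbitrary: w)
  case zero
  then show ?case by simp
next
  case (step x r a b)
  have rel: "r u = 0" if "plen u < 2" for u
  proof (rule ccontr)
    assume "r u \<noteq> 0"
    moreover obtain a b l where "l \<ge> 2" "\<forall>p. r p \<noteq> 0 \<longrightarrow> psrc p = a \<and> ptgt t p = b \<and> plen p = l"
      using assms(2) step.hyps(2) unfolding is_relation_def by blast
    ultimately have "plen u = l" by blast
    then show False using that \<open>l \<ge> 2\<close> by simp
  qed
  have "pmult V Arr s t r b u = 0" if "plen u < 2" for u
    by (rule pmult_short_left[OF rel that])
  then have "pmult V Arr s t a (pmult V Arr s t r b) w = 0"
    by (rule pmult_short_right[OF _ step.prems])
  then show ?case using step.IH[OF step.prems] by simp
qed

lemma bound_comp:
  fixes \<rho> :: "(('v,'a) path \<Rightarrow> 'k::field) set"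
  assumes "bound_path V Arr s t \<rho> (pcomp q p)" "is_path V Arr s t q" "is_path V Arr s t p" "ptgt t p = psrc q"
  shows "bound_path V Arr s t \<rho> q \<and> bound_path V Arr s t \<rho> p"
proof -
  have e: "pmult V Arr s t (single q) (single p) = (single (pcomp q p) :: ('v,'a) path \<Rightarrow> 'k)"
    using assms by (simp add: single_mult_single)
  have "single q \<notin> rel_ideal V Arr s t \<rho>"
  proof
    assume "single q \<in> rel_ideal V Arr s t \<rho>"
    from ideal_mult_right[OF this, of p] e assms(1) show False by (simp add: bound_path_def)
  qed
  moreover have "single p \<notin> rel_ideal V Arr s t \<rho>"
  proof
    assume "single p \<in> rel_ideal V Arr s t \<rho>"
    from ideal_mult_left[OF this, of q] e assms(1) show False by (simp add: bound_path_def)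
  qed
  ultimately show ?thesis using assms by (simp add: bound_path_def)
qed

lemma stable_arr: "stable_ntq V Arr s t \<rho> n \<tau> \<Longrightarrow> \<alpha> \<in> Arr \<Longrightarrow> s \<alpha> \<in> V \<and> t \<alpha> \<in> V"
  unfolding stable_ntq_def by blast

lemma stable_rel: "stable_ntq V Arr s t \<rho> n \<tau> \<Longrightarrow> \<forall>r\<in>\<rho>. is_relation V Arr s t r"
  unfolding stable_ntq_def by blast

lemma stable_bij: "stable_ntq V Arr s t \<rho> n \<tau> \<Longrightarrow> bij_betw \<tau> V V"
  unfolding stable_ntq_def by blast

lemma stable_top: "stable_ntq V Arr s t \<rho> n \<tau> \<Longrightarrow> bound_path V Arr s t \<rho> p \<Longrightarrow> plen p = n + 1 \<Longrightarrow> psrc p = \<tau> (ptgt t p)"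
  unfolding stable_ntq_def by blast

lemma stable_ex: "stable_ntq V Arr s t \<rho> n \<tau> \<Longrightarrow> i \<in> V \<Longrightarrow> \<exists>p. bound_path V Arr s t \<rho> p \<and> plen p = n + 1 \<and> ptgt t p = i"
  unfolding stable_ntq_def by blast

lemma single_hom_part:
  fixes P :: "('v,'a) path"
  assumes "is_path V Arr s t P"
  shows "(single P :: ('v,'a) path \<Rightarrow> 'k::field) \<in> hom_part V Arr s t (psrc P) (ptgt t P) (plen P)"
proof -
  have "{p. (single P :: ('v,'a) path \<Rightarrow> 'k::field) p \<noteq> 0} = {P}" by (auto simp: single_def)
  then show ?thesis
    using assms by (auto simp: hom_part_def is_elem_def single_def)
qed

lemma bound_short:
  assumes "stable_ntq V Arr s t \<rho> n \<tau>" "is_path V Arr s t p" "plen p < 2"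
  shows "bound_path V Arr s t \<rho> p"
proof -
  have "single p \<notin> rel_ideal V Arr s t \<rho>"
  proof
    assume "single p \<in> rel_ideal V Arr s t \<rho>"
    from ideal_short[OF this stable_rel[OF assms(1)] assms(3)] show False by (simp add: single_def)
  qed
  then show ?thesis using assms by (simp add: bound_path_def)
qed

lemma ND_left:
  fixes \<rho> :: "(('v,'a) path \<Rightarrow> 'k::field) set"
  assumes st: "stable_ntq V Arr s t \<rho> n \<tau>" and b: "bound_path V Arr s t \<rho> P" and l: "plen P \<le> n + 1"
  shows "\<exists>q. is_path V Arr s t q \<and> psrc q = ptgt t P \<and> plen q = n + 1 - plen P \<and> bound_path V Arr s t \<rho> (pcomp q P)"
proof -
  have P: "is_path V Arr s t P" "single P \<notin> rel_ideal V Arr s t \<rho>" using b by (auto simp: bound_path_def)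
  have "\<forall>i j d x. d \<le> n + 1 \<and> x \<in> hom_part V Arr s t i j d \<and> x \<notin> rel_ideal V Arr s t \<rho> \<longrightarrow>
        (\<exists>q. is_path V Arr s t q \<and> psrc q = j \<and> plen q = n + 1 - d \<and>
             pmult V Arr s t (single q) x \<notin> rel_ideal V Arr s t \<rho>)"
    using st unfolding stable_ntq_def by blast
  from this[rule_format, OF conjI[OF l conjI[OF single_hom_part[OF P(1)] P(2)]]]
  obtain q where q: "is_path V Arr s t q" "psrc q = ptgt t P" "plen q = n + 1 - plen P"
    "pmult V Arr s t (single q) (single P) \<notin> rel_ideal V Arr s t \<rho>" by blast
  then have "single (pcomp q P) \<notin> rel_ideal V Arr s t \<rho>"
    using P rel_ideal.zero by (auto simp: single_mult_single split: if_splits)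
  moreover have "is_path V Arr s t (pcomp q P)" using q P by (auto intro: is_path_pcomp)
  ultimately show ?thesis using q by (intro exI[of _ q]) (auto simp: bound_path_def)
qed

lemma ND_right:
  fixes \<rho> :: "(('v,'a) path \<Rightarrow> 'k::field) set"
  assumes st: "stable_ntq V Arr s t \<rho> n \<tau>" and b: "bound_path V Arr s t \<rho> P" and l: "plen P \<le> n + 1"
  shows "\<exists>p. is_path V Arr s t p \<and> ptgt t p = psrc P \<and> plen p = n + 1 - plen P \<and> bound_path V Arr s t \<rho> (pcomp P p)"
proof -
  have P: "is_path V Arr s t P" "single P \<notin> rel_ideal V Arr s t \<rho>" using b by (auto simp: bound_path_def)
  have "\<forall>i j d x. d \<le> n + 1 \<and> x \<in> hom_part V Arr s t i j d \<and> x \<notin> rel_ideal V Arr s t \<rho> \<longrightarrow>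
        (\<exists>p. is_path V Arr s t p \<and> ptgt t p = i \<and> plen p = n + 1 - d \<and>
             pmult V Arr s t x (single p) \<notin> rel_ideal V Arr s t \<rho>)"
    using st unfolding stable_ntq_def by blast
  from this[rule_format, OF conjI[OF l conjI[OF single_hom_part[OF P(1)] P(2)]]]
  obtain p where p: "is_path V Arr s t p" "ptgt t p = psrc P" "plen p = n + 1 - plen P"
    "pmult V Arr s t (single P) (single p) \<notin> rel_ideal V Arr s t \<rho>" by blast
  then have "single (pcomp P p) \<notin> rel_ideal V Arr s t \<rho>"
    using P rel_ideal.zero by (auto simp: single_mult_single split: if_splits)
  moreover have "is_path V Arr s t (pcomp P p)" using p P by (auto intro: is_path_pcomp)
  ultimately show ?thesis using p by (intro exI[of _ p]) (auto simp: bound_path_def)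
qed

fun zz :: "('a \<Rightarrow> 'v) \<Rightarrow> bool \<Rightarrow> ('v,'a) path list \<Rightarrow> bool" where
  "zz t b [] = True"
| "zz t b [p] = True"
| "zz t b (p # q # r) = ((if b then ptgt t p = ptgt t q else psrc p = psrc q) \<and> zz t (\<not> b) (q # r))"

fun srcs :: "bool \<Rightarrow> ('v,'a) path list \<Rightarrow> 'v set" where
  "srcs b [] = {}"
| "srcs b [p] = {}"
| "srcs b (p # q # r) = (if b then {} else {psrc p}) \<union> srcs (\<not> b) (q # r)"

fun snks :: "('a \<Rightarrow> 'v) \<Rightarrow> bool \<Rightarrow> ('v,'a) path list \<Rightarrow> 'v set" where
  "snks t b [] = {}"
| "snks t b [p] = {}"
| "snks t b (p # q # r) = (if b then {ptgt t p} else {}) \<union> snks t (\<not> b) (q # r)"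

fun gr :: "('v,'a) path list \<Rightarrow> int" where
  "gr [] = 0"
| "gr (p # w) = int (plen p) - gr w"

definition endv :: "('a \<Rightarrow> 'v) \<Rightarrow> ('v,'a) path list \<Rightarrow> 'v" where
  "endv t w = (if even (length w - 1) then ptgt t (last w) else psrc (last w))"

definition prewalk :: "'v set \<Rightarrow> 'a set \<Rightarrow> ('a \<Rightarrow> 'v) \<Rightarrow> ('a \<Rightarrow> 'v) \<Rightarrow> ('v,'a) path list \<Rightarrow> 'v \<Rightarrow> 'v \<Rightarrow> bool" where
  "prewalk V Arr s t w a b \<longleftrightarrow> w \<noteq> [] \<and> (\<forall>p\<in>set w. is_path V Arr s t p) \<and> zz t True w
     \<and> psrc (hd w) = a \<and> b = endv t w"

definition midpos :: "('v,'a) path list \<Rightarrow> bool" where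
  "midpos w \<longleftrightarrow> (\<forall>h. 0 < h \<and> h < length w - 1 \<longrightarrow> 0 < plen (w ! h))"

lemma all_nat_Suc: "(\<forall>k::nat. P k) \<longleftrightarrow> P 0 \<and> (\<forall>k. P (Suc k))"
  by (metis not0_implies_Suc)

lemma ex_nat_Suc: "(\<exists>k::nat. P k) \<longleftrightarrow> P 0 \<or> (\<exists>k. P (Suc k))"
  by (metis not0_implies_Suc)

lemma zz_nth:
  "zz t b w \<longleftrightarrow> (\<forall>k. Suc k < length w \<longrightarrow>
     (if even k = b then ptgt t (w!k) = ptgt t (w!Suc k) else psrc (w!k) = psrc (w!Suc k)))"
proof (induction t b w rule: zz.induct)
  case (3 t b p q r)
  show ?case
    apply (simp only: zz.simps 3)
    apply (subst (2) all_nat_Suc)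
    apply simp
    done
qed auto

lemma srcs_nth:
  "x \<in> srcs b w \<longleftrightarrow> (\<exists>k. Suc k < length w \<and> even k \<noteq> b \<and> x = psrc (w!k))"
proof (induction b w rule: srcs.induct)
  case (3 b p q r)
  show ?case
    apply (simp only: srcs.simps Un_iff 3)
    apply (subst (2) ex_nat_Suc)
    apply auto
    done
qed auto

lemma snks_nth:
  "x \<in> snks t b w \<longleftrightarrow> (\<exists>k. Suc k < length w \<and> even k = b \<and> x = ptgt t (w!k))"
proof (induction t b w rule: snks.induct)
  case (3 t b p q r)
  show ?case
    apply (simp only: snks.simps Un_iff 3)
    apply (subst (2) ex_nat_Suc)
    apply auto
    done
qed auto

lemma walk_grade_gr: "walk_grade w = gr w"
proof (induction w)
  case Nil
  then show ?case by (simp add: walk_grade_def)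
next
  case (Cons p w)
  have "walk_grade (p # w) = int (plen p) + (\<Sum>h<length w. (-1) ^ Suc h * int (plen (w ! h)))"
    unfolding walk_grade_def by (simp add: sum.lessThan_Suc_shift del: sum.lessThan_Suc)
  also have "\<dots> = int (plen p) - walk_grade w"
    by (simp add: walk_grade_def sum_negf)
  finally show ?case using Cons by simp
qed

lemma walk_sources_srcs: "walk_sources w = srcs True w"
proof -
  have "x \<in> walk_sources w \<longleftrightarrow> x \<in> srcs True w" for x
  proof
    assume "x \<in> walk_sources w"
    then obtain h where "2 * h + 2 < length w" "x = psrc (w ! (2 * h + 1))" by (auto simp: walk_sources_def)
    then show "x \<in> srcs True w" unfolding srcs_nth by (intro exI[of _ "2*h+1"]) auto
  next
    assume "x \<in> srcs True w"
    then obtain k where k: "Suc k < length w" "odd k" "x = psrc (w!k)" unfolding srcs_nth by auto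
    then obtain h where "k = 2 * h + 1" by (metis oddE)
    then show "x \<in> walk_sources w" using k by (auto simp: walk_sources_def)
  qed
  then show ?thesis by blast
qed

lemma walk_sinks_snks: "walk_sinks t w = snks t True w"
proof -
  have "x \<in> walk_sinks t w \<longleftrightarrow> x \<in> snks t True w" for x
  proof
    assume "x \<in> walk_sinks t w"
    then obtain h where "2 * h + 1 < length w" "x = ptgt t (w ! (2 * h))" by (auto simp: walk_sinks_def)
    then show "x \<in> snks t True w" unfolding snks_nth by (intro exI[of _ "2*h"]) auto
  next
    assume "x \<in> snks t True w"
    then obtain k where k: "Suc k < length w" "even k" "x = ptgt t (w!k)" unfolding snks_nth by auto
    then obtain h where "k = 2 * h" by (metis evenE)
    then show "x \<in> walk_sinks t w" using k by (auto simp: walk_sinks_def)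
  qed
  then show ?thesis by blast
qed

lemma zz_walk:
  "zz t True w \<longleftrightarrow> (\<forall>h. 2 * h + 1 < length w \<longrightarrow> ptgt t (w ! (2 * h)) = ptgt t (w ! (2 * h + 1)))
     \<and> (\<forall>h. 2 * h + 2 < length w \<longrightarrow> psrc (w ! (2 * h + 1)) = psrc (w ! (2 * h + 2)))"
proof
  assume "zz t True w"
  then have A: "\<And>k. Suc k < length w \<Longrightarrow>
     (if even k then ptgt t (w!k) = ptgt t (w!Suc k) else psrc (w!k) = psrc (w!Suc k))"
    unfolding zz_nth by auto
  show "(\<forall>h. 2 * h + 1 < length w \<longrightarrow> ptgt t (w ! (2 * h)) = ptgt t (w ! (2 * h + 1)))
     \<and> (\<forall>h. 2 * h + 2 < length w \<longrightarrow> psrc (w ! (2 * h + 1)) = psrc (w ! (2 * h + 2)))"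
  proof (intro conjI allI impI)
    fix h assume "2 * h + 1 < length w"
    from A[of "2*h"] this show "ptgt t (w ! (2 * h)) = ptgt t (w ! (2 * h + 1))" by simp
  next
    fix h assume "2 * h + 2 < length w"
    from A[of "2*h+1"] this show "psrc (w ! (2 * h + 1)) = psrc (w ! (2 * h + 2))" by simp
  qed
next
  assume B: "(\<forall>h. 2 * h + 1 < length w \<longrightarrow> ptgt t (w ! (2 * h)) = ptgt t (w ! (2 * h + 1)))
     \<and> (\<forall>h. 2 * h + 2 < length w \<longrightarrow> psrc (w ! (2 * h + 1)) = psrc (w ! (2 * h + 2)))"
  show "zz t True w" unfolding zz_nth
  proof (intro allI impI)
    fix k assume k: "Suc k < length w"
    show "if even k = True then ptgt t (w!k) = ptgt t (w!Suc k) else psrc (w!k) = psrc (w!Suc k)"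
    proof (cases "even k")
      case True
      then obtain h where "k = 2 * h" by (metis evenE)
      then show ?thesis using B k True by simp
    next
      case False
      then obtain h where "k = 2 * h + 1" by (metis oddE)
      then show ?thesis using B k False by simp
    qed
  qed
qed

lemma is_walk_iff: "is_walk V Arr s t w a b \<longleftrightarrow> prewalk V Arr s t w a b \<and> midpos w"
  unfolding is_walk_def prewalk_def midpos_def zz_walk endv_def
  by (cases w) auto

lemma zz_Cons: "zz t b (p # ys) \<longleftrightarrow> (ys \<noteq> [] \<longrightarrow> (if b then ptgt t p = ptgt t (hd ys) else psrc p = psrc (hd ys))) \<and> zz t (\<not> b) ys"
  by (cases ys) auto

lemma srcs_Cons: "srcs b (p # ys) = (if \<not> b \<and> ys \<noteq> [] then {psrc p} else {}) \<union> srcs (\<not> b) ys"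
  by (cases ys) auto

lemma snks_Cons: "snks t b (p # ys) = (if b \<and> ys \<noteq> [] then {ptgt t p} else {}) \<union> snks t (\<not> b) ys"
  by (cases ys) auto

declare zz.simps(2,3)[simp del] srcs.simps(2,3)[simp del] snks.simps(2,3)[simp del]
declare zz_Cons[simp] srcs_Cons[simp] snks_Cons[simp]

lemma zz_append:
  "zz t b (xs @ ys) \<longleftrightarrow> zz t b xs \<and> zz t (b = even (length xs)) ys \<and>
     (xs \<noteq> [] \<and> ys \<noteq> [] \<longrightarrow> (if b = odd (length xs) then ptgt t (last xs) = ptgt t (hd ys) else psrc (last xs) = psrc (hd ys)))"
  by (induction xs arbitrary: b) auto

lemma srcs_append:
  "srcs b (xs @ ys) = srcs b xs \<union> srcs (b = even (length xs)) ys \<union>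
     (if xs \<noteq> [] \<and> ys \<noteq> [] \<and> b = even (length xs) then {psrc (last xs)} else {})"
  by (induction xs arbitrary: b) auto

lemma snks_append:
  "snks t b (xs @ ys) = snks t b xs \<union> snks t (b = even (length xs)) ys \<union>
     (if xs \<noteq> [] \<and> ys \<noteq> [] \<and> b = odd (length xs) then {ptgt t (last xs)} else {})"
  by (induction xs arbitrary: b) auto

lemma gr_append: "gr (xs @ ys) = gr xs + (-1) ^ length xs * gr ys"
  by (induction xs) (auto simp: algebra_simps)

lemma ptgt_triv: "plen p = 0 \<Longrightarrow> ptgt t p = fst p"
  by (simp add: plen_def ptgt_def)

lemma endv_append: "zs \<noteq> [] \<Longrightarrow> endv t (xs @ zs) =
   (if even (length xs + length zs - 1) then ptgt t (last zs) else psrc (last zs))"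
  by (simp add: endv_def)

lemma merge_step:
  fixes xs ys :: "('v,'a) path list" and x p y :: "('v,'a) path"
  defines "m \<equiv> (if even (length xs) then pcomp y x else pcomp x y)"
  assumes pw: "prewalk V Arr s t (xs @ [x,p,y] @ ys) a b" and p0: "plen p = 0"
  shows "prewalk V Arr s t (xs @ [m] @ ys) a b \<and> gr (xs @ [m] @ ys) = gr (xs @ [x,p,y] @ ys)
    \<and> pverts t m \<subseteq> pverts t x \<union> pverts t y
    \<and> (plen m = 0 \<longrightarrow> plen x = 0 \<and> plen y = 0 \<and> (fst m = fst x \<or> fst m = fst y))
    \<and> srcs True (xs @ [x,p,y] @ ys) \<subseteq> insert (fst p) (srcs True (xs @ [m] @ ys))
    \<and> snks t True (xs @ [x,p,y] @ ys) \<subseteq> insert (fst p) (snks t True (xs @ [m] @ ys))"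
proof -
  have paths: "is_path V Arr s t x" "is_path V Arr s t y" "\<forall>q\<in>set xs. is_path V Arr s t q" "\<forall>q\<in>set ys. is_path V Arr s t q"
    using pw by (auto simp: prewalk_def)
  have zw: "zz t True (xs @ [x,p,y] @ ys)" using pw by (simp add: prewalk_def)
  have tp: "ptgt t p = fst p" "psrc p = fst p" using p0 by (auto simp: ptgt_triv psrc_def)
  show ?thesis
  proof (cases "even (length xs)")
    case True
    have r: "ptgt t x = psrc y" "ys \<noteq> [] \<longrightarrow> ptgt t y = ptgt t (hd ys)" "zz t False ys"
      "xs \<noteq> [] \<longrightarrow> psrc (last xs) = psrc x" "zz t True xs"
      using zw True tp by (auto simp: zz_append)
    have me: "m = pcomp y x" using True by (simp add: m_def)
    have mp: "is_path V Arr s t m" "psrc m = psrc x" "ptgt t m = ptgt t y"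
      using me r paths by (auto intro: is_path_pcomp simp: ptgt_pcomp)
    have pw': "prewalk V Arr s t (xs @ [m] @ ys) a b"
      using pw mp r True paths unfolding prewalk_def
      by (cases "ys = []") (auto simp: zz_append endv_append hd_append)
    have e2: "psrc y = fst p" "ptgt t x = fst p" using zw True tp by (auto simp: zz_append)
    have "gr (xs @ [m] @ ys) = gr (xs @ [x,p,y] @ ys)" using p0 me by (simp add: gr_append)
    moreover have "pverts t m \<subseteq> pverts t x \<union> pverts t y" using me r by (simp add: pverts_pcomp)
    moreover have "plen m = 0 \<longrightarrow> plen x = 0 \<and> plen y = 0 \<and> (fst m = fst x \<or> fst m = fst y)"
      using me by (simp add: pcomp_def plen_def)
    moreover have "srcs True (xs @ [x,p,y] @ ys) \<subseteq> insert (fst p) (srcs True (xs @ [m] @ ys))"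
      using True tp by (auto simp: srcs_append)
    moreover have "snks t True (xs @ [x,p,y] @ ys) \<subseteq> insert (fst p) (snks t True (xs @ [m] @ ys))"
      using True tp e2 mp by (auto simp: snks_append)
    ultimately show ?thesis using pw' by blast
  next
    case False
    have r: "ptgt t y = psrc x" "ys \<noteq> [] \<longrightarrow> psrc y = psrc (hd ys)" "zz t True ys"
      "xs \<noteq> [] \<longrightarrow> ptgt t (last xs) = ptgt t x" "zz t True xs" "xs \<noteq> []"
      using zw False tp by (auto simp: zz_append)
    have me: "m = pcomp x y" using False by (simp add: m_def)
    have mp: "is_path V Arr s t m" "psrc m = psrc y" "ptgt t m = ptgt t x"
      using me r paths by (auto intro: is_path_pcomp simp: ptgt_pcomp)
    have pw': "prewalk V Arr s t (xs @ [m] @ ys) a b"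
      using pw mp r False paths unfolding prewalk_def
      by (cases "ys = []") (auto simp: zz_append endv_append hd_append)
    have e2: "psrc x = fst p" "ptgt t y = fst p" using zw False tp by (auto simp: zz_append)
    have "gr (xs @ [m] @ ys) = gr (xs @ [x,p,y] @ ys)" using p0 me by (simp add: gr_append)
    moreover have "pverts t m \<subseteq> pverts t x \<union> pverts t y" using me r by (simp add: pverts_pcomp)
    moreover have "plen m = 0 \<longrightarrow> plen x = 0 \<and> plen y = 0 \<and> (fst m = fst x \<or> fst m = fst y)"
      using me by (simp add: pcomp_def plen_def)
    moreover have "srcs True (xs @ [x,p,y] @ ys) \<subseteq> insert (fst p) (srcs True (xs @ [m] @ ys))"
      using False tp e2 mp by (auto simp: srcs_append)
    moreover have "snks t True (xs @ [x,p,y] @ ys) \<subseteq> insert (fst p) (snks t True (xs @ [m] @ ys))"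
      using False tp by (auto simp: snks_append)
    ultimately show ?thesis using pw' by blast
  qed
qed

lemma list_dec3:
  assumes "0 < h" "h + 1 < length w"
  shows "w = take (h-1) w @ [w!(h-1), w!h, w!(h+1)] @ drop (h+2) w"
proof -
  have "drop (h-1) w = w!(h-1) # drop h w" using assms Cons_nth_drop_Suc[of "h-1" w] by simp
  also have "drop h w = w!h # drop (h+1) w" using assms Cons_nth_drop_Suc[of h w] by simp
  also have "drop (h+1) w = w!(h+1) # drop (h+2) w" using assms Cons_nth_drop_Suc[of "h+1" w] by simp
  finally show ?thesis by (metis append_Cons append_Nil append_take_drop_id)
qed

lemma list_dec2:
  assumes "e + 1 < length w"
  shows "w = take e w @ [w!e, w!(e+1)] @ drop (e+2) w"
proof -
  have "drop e w = w!e # drop (e+1) w" using assms Cons_nth_drop_Suc[of e w] by simp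
  also have "drop (e+1) w = w!(e+1) # drop (e+2) w" using assms Cons_nth_drop_Suc[of "e+1" w] by simp
  finally show ?thesis by (metis append_Cons append_Nil append_take_drop_id)
qed

lemma normalize:
  assumes "prewalk V Arr s t w a b" "\<forall>p\<in>set w. pverts t p \<subseteq> X" "\<forall>p\<in>set w. plen p = 0 \<longrightarrow> fst p \<noteq> c"
  shows "\<exists>w'. prewalk V Arr s t w' a b \<and> midpos w' \<and> (\<forall>p\<in>set w'. pverts t p \<subseteq> X) \<and> gr w' = gr w
     \<and> (c \<in> srcs True w \<longrightarrow> c \<in> srcs True w') \<and> (c \<in> snks t True w \<longrightarrow> c \<in> snks t True w')"
  using assms
proof (induction "length w" arbitrary: w rule: less_induct)
  case less
  show ?case
  proof (cases "midpos w")
    case True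
    then show ?thesis using less.prems by blast
  next
    case False
    then obtain h where h: "0 < h" "h < length w - 1" "plen (w!h) = 0" by (auto simp: midpos_def)
    define xs where "xs = take (h-1) w"
    define x where "x = w!(h-1)"
    define p where "p = w!h"
    define y where "y = w!(h+1)"
    define ys where "ys = drop (h+2) w"
    have wd: "w = xs @ [x,p,y] @ ys" unfolding xs_def x_def p_def y_def ys_def
      using list_dec3[of h w] h by simp
    have inw: "x \<in> set w" "p \<in> set w" "y \<in> set w" "set xs \<subseteq> set w" "set ys \<subseteq> set w"
    proof -
      have "set w = set (xs @ [x,p,y] @ ys)" using arg_cong[OF wd, of set] .
      then show "x \<in> set w" "p \<in> set w" "y \<in> set w" "set xs \<subseteq> set w" "set ys \<subseteq> set w" by auto
    qed
    define m where "m = (if even (length xs) then pcomp y x else pcomp x y)"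
    have p0: "plen p = 0" using h p_def by simp
    have ms: "prewalk V Arr s t (xs @ [m] @ ys) a b \<and> gr (xs @ [m] @ ys) = gr (xs @ [x,p,y] @ ys)
    \<and> pverts t m \<subseteq> pverts t x \<union> pverts t y
    \<and> (plen m = 0 \<longrightarrow> plen x = 0 \<and> plen y = 0 \<and> (fst m = fst x \<or> fst m = fst y))
    \<and> srcs True (xs @ [x,p,y] @ ys) \<subseteq> insert (fst p) (srcs True (xs @ [m] @ ys))
    \<and> snks t True (xs @ [x,p,y] @ ys) \<subseteq> insert (fst p) (snks t True (xs @ [m] @ ys))"
      unfolding m_def by (rule merge_step) (use less.prems(1) wd p0 in auto)
    have len: "length (xs @ [m] @ ys) < length w" using wd by simp
    have "pverts t m \<subseteq> X" using ms inw less.prems(2) by blast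
    then have pv: "\<forall>q\<in>set (xs @ [m] @ ys). pverts t q \<subseteq> X"
      using inw less.prems(2) by auto
    have tr: "\<forall>q\<in>set (xs @ [m] @ ys). plen q = 0 \<longrightarrow> fst q \<noteq> c"
      using ms inw less.prems(3) by auto
    obtain w' where w': "prewalk V Arr s t w' a b" "midpos w'" "\<forall>p\<in>set w'. pverts t p \<subseteq> X"
      "gr w' = gr (xs @ [m] @ ys)" "c \<in> srcs True (xs @ [m] @ ys) \<longrightarrow> c \<in> srcs True w'"
      "c \<in> snks t True (xs @ [m] @ ys) \<longrightarrow> c \<in> snks t True w'"
      using less.hyps[OF len ms[THEN conjunct1] pv tr] by blast
    have pc: "fst p \<noteq> c" using less.prems(3) inw p0 by auto
    show ?thesis
      using w' ms pc wd by (intro exI[of _ w']) auto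
  qed
qed

lemma path_verts_V:
  assumes "is_path V Arr s t P" "\<forall>\<alpha>\<in>Arr. t \<alpha> \<in> V"
  shows "pverts t P \<subseteq> V"
  using assms by (auto simp: is_path_def pverts_def)

locale SL =
  fixes V :: "'v set" and Arr :: "'a set" and s t :: "'a \<Rightarrow> 'v"
    and \<rho> :: "(('v,'a) path \<Rightarrow> 'k::field) set" and n :: nat and \<tau> :: "'v \<Rightarrow> 'v"
    and S :: "'v set"
  assumes st: "stable_ntq V Arr s t \<rho> n \<tau>"
    and ac: "acyclic_quiver V Arr s t"
    and sl: "complete_tau_slice V Arr s t \<tau> S"
begin

abbreviation "path \<equiv> is_path V Arr s t"
abbreviation "bound \<equiv> bound_path V Arr s t \<rho>"
abbreviation "tinv \<equiv> tau_inv V \<tau>"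

lemma arrV: "\<alpha> \<in> Arr \<Longrightarrow> s \<alpha> \<in> V \<and> t \<alpha> \<in> V"
  using stable_arr[OF st] .

lemma pvertsV: "path P \<Longrightarrow> pverts t P \<subseteq> V"
  using path_verts_V arrV by blast

lemma ptgtV: "path P \<Longrightarrow> ptgt t P \<in> V"
  using pvertsV ptgt_in_pverts by blast

lemma psrcV: "path P \<Longrightarrow> psrc P \<in> V"
  by (simp add: is_path_def psrc_def)

lemma acyc: "path P \<Longrightarrow> psrc P = ptgt t P \<Longrightarrow> plen P = 0"
  using ac unfolding acyclic_quiver_def by (metis gr0I)

lemma SV: "S \<subseteq> V" using sl by (simp add: complete_tau_slice_def)

lemma convex: "path P \<Longrightarrow> psrc P \<in> S \<Longrightarrow> ptgt t P \<in> S \<Longrightarrow> pverts t P \<subseteq> S"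
  using sl unfolding complete_tau_slice_def by blast

lemma bij: "bij_betw \<tau> V V" using stable_bij[OF st] .

lemma tauV: "x \<in> V \<Longrightarrow> \<tau> x \<in> V" using bij by (auto simp: bij_betw_def)

lemma tinvV: "x \<in> V \<Longrightarrow> tinv x \<in> V"
  using bij unfolding tau_inv_def bij_betw_def by (metis inv_into_into)

lemma tau_tinv: "x \<in> V \<Longrightarrow> \<tau> (tinv x) = x"
  using bij unfolding tau_inv_def bij_betw_def by (metis f_inv_into_f)

lemma tinv_eq: "y \<in> V \<Longrightarrow> \<tau> y = x \<Longrightarrow> tinv x = y"
  using bij unfolding tau_inv_def bij_betw_def by (metis inv_into_f_f)

lemma tau_path: "x \<in> V \<Longrightarrow> \<exists>P. bound P \<and> plen P = n + 1 \<and> ptgt t P = x \<and> psrc P = \<tau> x"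
  using stable_ex[OF st] stable_top[OF st] by metis

lemma bound_path: "bound P \<Longrightarrow> path P" by (simp add: bound_path_def)

lemma taupow_V: "x \<in> V \<Longrightarrow> (\<tau> ^^ m) x \<in> V"
  by (induction m) (auto simp: tauV)

lemma tinvpow_V: "x \<in> V \<Longrightarrow> (tinv ^^ m) x \<in> V"
  by (induction m) (auto simp: tinvV)

lemma G1: "x \<in> V \<Longrightarrow> \<exists>P. path P \<and> psrc P = (\<tau> ^^ m) x \<and> ptgt t P = x"
proof (induction m)
  case 0
  then show ?case by (intro exI[of _ "(x, [])"]) (auto simp: is_path_def psrc_def ptgt_def)
next
  case (Suc m)
  then obtain P where P: "path P" "psrc P = (\<tau> ^^ m) x" "ptgt t P = x" by blast
  obtain Q where Q: "bound Q" "ptgt t Q = (\<tau> ^^ m) x" "psrc Q = \<tau> ((\<tau> ^^ m) x)"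
    using tau_path[OF taupow_V[OF Suc.prems, of m]] by blast
  show ?case using P Q bound_path[OF Q(1)]
    by (intro exI[of _ "pcomp P Q"]) (auto intro: is_path_pcomp simp: ptgt_pcomp)
qed

lemma G2: "x \<in> V \<Longrightarrow> \<exists>P. path P \<and> psrc P = x \<and> ptgt t P = (tinv ^^ m) x"
proof (induction m)
  case 0
  then show ?case by (intro exI[of _ "(x, [])"]) (auto simp: is_path_def psrc_def ptgt_def)
next
  case (Suc m)
  then obtain P where P: "path P" "psrc P = x" "ptgt t P = (tinv ^^ m) x" by blast
  have yV: "tinv ((tinv ^^ m) x) \<in> V" using tinvV tinvpow_V Suc.prems by blast
  obtain Q where Q: "bound Q" "ptgt t Q = tinv ((tinv ^^ m) x)" "psrc Q = \<tau> (tinv ((tinv ^^ m) x))"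
    using tau_path[OF yV] by blast
  have "psrc Q = (tinv ^^ m) x" using Q(3) tau_tinv tinvpow_V Suc.prems by simp
  then show ?case using P Q bound_path[OF Q(1)]
    by (intro exI[of _ "pcomp Q P"]) (auto intro: is_path_pcomp simp: ptgt_pcomp)
qed

lemma orbit_rep: "v \<in> V \<Longrightarrow> \<exists>u\<in>S. (\<exists>m. u = (\<tau> ^^ m) v) \<or> (\<exists>m. u = (tinv ^^ m) v)"
  using sl unfolding complete_tau_slice_def tau_orbit_def by blast

lemma orbit_unique: "u \<in> S \<Longrightarrow> v \<in> S \<Longrightarrow> u = (\<tau> ^^ m) v \<or> u = (tinv ^^ m) v \<Longrightarrow> u = v"
proof -
  assume a: "u \<in> S" "v \<in> S" "u = (\<tau> ^^ m) v \<or> u = (tinv ^^ m) v"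
  have vV: "v \<in> V" using a SV by blast
  have "\<exists>!x. x \<in> S \<and> x \<in> tau_orbit V \<tau> v" using sl vV unfolding complete_tau_slice_def by blast
  moreover have "u \<in> tau_orbit V \<tau> v" using a(3) unfolding tau_orbit_def by blast
  moreover have "v \<in> tau_orbit V \<tau> v" unfolding tau_orbit_def by (auto intro: exI[of _ 0])
  ultimately show "u = v" using a by blast
qed

lemma tau_neq: "x \<in> V \<Longrightarrow> \<tau> x \<noteq> x"
proof
  assume "x \<in> V" "\<tau> x = x"
  then obtain P where "bound P" "plen P = n + 1" "ptgt t P = x" "psrc P = \<tau> x" using tau_path by blast
  then show False using acyc[OF bound_path] \<open>\<tau> x = x\<close> by simp
qed

lemma tau_notin: "j \<in> S \<Longrightarrow> \<tau> j \<notin> S"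
  using orbit_unique[of "\<tau> j" j 1] tau_neq SV by auto

lemma tinv_notin: "j \<in> S \<Longrightarrow> tinv j \<notin> S"
proof
  assume a: "j \<in> S" "tinv j \<in> S"
  then have "tinv j = j" using orbit_unique[of "tinv j" j 1] by auto
  then have "\<tau> j = j" using tau_tinv[of j] a SV by (metis subsetD)
  then show False using tau_neq a SV by blast
qed

lemma sink_chain: "is_sink_of Arr s t S j \<Longrightarrow> chain s t v as \<Longrightarrow> set as \<subseteq> Arr \<Longrightarrow> insert v (t ` set as) \<subseteq> S
   \<Longrightarrow> j \<in> insert v (t ` set as) \<Longrightarrow> ptgt t (v, as) = j"
proof (induction as arbitrary: v)
  case Nil
  then show ?case by (simp add: ptgt_def)
next
  case (Cons a as)
  have "v \<noteq> j" using Cons.prems unfolding is_sink_of_def by auto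
  then have "j \<in> insert (t a) (t ` set as)" using Cons.prems by auto
  then show ?case using Cons by (simp add: ptgt_Cons)
qed

lemma sink_path: "is_sink_of Arr s t S j \<Longrightarrow> path P \<Longrightarrow> pverts t P \<subseteq> S \<Longrightarrow> j \<in> pverts t P \<Longrightarrow> ptgt t P = j"
  using sink_chain[of j "fst P" "snd P"] by (cases P) (auto simp: is_path_def pverts_def)

lemma source_chain: "is_source_of Arr s t S j \<Longrightarrow> chain s t v as \<Longrightarrow> set as \<subseteq> Arr \<Longrightarrow> insert v (t ` set as) \<subseteq> S
   \<Longrightarrow> j \<notin> t ` set as"
proof (induction as arbitrary: v)
  case Nil
  then show ?case by simp
next
  case (Cons a as)
  have "t a \<noteq> j" using Cons.prems unfolding is_source_of_def by auto
  then show ?case using Cons by auto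
qed

lemma source_path: "is_source_of Arr s t S j \<Longrightarrow> path P \<Longrightarrow> pverts t P \<subseteq> S \<Longrightarrow> j \<in> pverts t P \<Longrightarrow> psrc P = j"
  using source_chain[of j "fst P" "snd P"] by (cases P) (auto simp: is_path_def pverts_def psrc_def)

lemma no_path_from_sink:
  assumes "is_sink_of Arr s t S j" "path P" "psrc P = j" "ptgt t P \<in> S"
  shows "plen P = 0"
proof -
  have jS: "j \<in> S" using assms(1) by (simp add: is_sink_of_def)
  have "pverts t P \<subseteq> S" using convex assms jS by blast
  moreover have "j \<in> pverts t P" using assms(3) by (auto simp: pverts_def psrc_def)
  ultimately have "ptgt t P = j" using sink_path assms by blast
  then show ?thesis using acyc assms by simp
qed

lemma no_path_to_source:
  assumes "is_source_of Arr s t S j" "path P" "ptgt t P = j" "psrc P \<in> S"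
  shows "plen P = 0"
proof -
  have jS: "j \<in> S" using assms(1) by (simp add: is_source_of_def)
  have "pverts t P \<subseteq> S" using convex assms jS by blast
  moreover have "j \<in> pverts t P" using assms(3) ptgt_in_pverts by metis
  ultimately have "psrc P = j" using source_path assms by blast
  then show ?thesis using acyc assms by simp
qed


lemma path_split:
  assumes "path (v, xs @ ys)" "xs \<noteq> []"
  shows "path (v, xs) \<and> path (t (last xs), ys) \<and> ptgt t (v, xs) = t (last xs)"
proof -
  have "last xs \<in> Arr" using assms by (auto simp: is_path_def)
  then have "t (last xs) \<in> V" using arrV by blast
  then show ?thesis using assms by (auto simp: is_path_def chain_append ptgt_def)
qed

lemma K1:
  assumes sk: "is_sink_of Arr s t S j" and al: "\<alpha> \<in> Arr" "t \<alpha> = j" "s \<alpha> \<in> S"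
  shows "\<exists>P. path P \<and> psrc P = \<tau> j \<and> ptgt t P = s \<alpha> \<and> plen P = n \<and> 0 < n \<and> pverts t P \<subseteq> (S - {j}) \<union> {\<tau> j}"
proof -
  have jS: "j \<in> S" using sk by (simp add: is_sink_of_def)
  define A where "A = (s \<alpha>, [\<alpha>])"
  have Ap: "path A" using al arrV by (simp add: A_def is_path_def)
  have plenA: "plen A = 1" by (simp add: A_def plen_def)
  have ptA: "ptgt t A = j" by (simp add: A_def ptgt_def al)
  have psA: "psrc A = s \<alpha>" by (simp add: A_def psrc_def)
  have Ab: "bound A" using bound_short[OF st Ap] plenA by simp
  obtain p where p: "path p" "ptgt t p = psrc A" "plen p = n" "bound (pcomp A p)"
    using ND_right[OF st Ab] plenA by auto
  have ptB: "ptgt t (pcomp A p) = j" using ptgt_pcomp[OF p(2)] ptA by simp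
  have psp: "psrc p = \<tau> j" using stable_top[OF st p(4)] p(3) plenA ptB by simp
  have n0: "0 < n"
  proof (rule ccontr)
    assume "\<not> 0 < n"
    then have "plen p = 0" using p by simp
    then have "ptgt t p = psrc p" by (simp add: ptgt_triv psrc_def)
    then have "s \<alpha> = \<tau> j" using p psA psp by simp
    then show False using al tau_notin jS by simp
  qed
  have "v \<in> (S - {j}) \<union> {\<tau> j}" if v: "v \<in> pverts t p" for v
  proof (cases "v = fst p")
    case True
    then show ?thesis using psp by (simp add: psrc_def)
  next
    case False
    then obtain \<gamma> where g: "\<gamma> \<in> set (snd p)" "v = t \<gamma>" using v by (auto simp: pverts_def)
    then obtain as1 as2 where sp: "snd p = as1 @ \<gamma> # as2" by (meson split_list)
    define P1 where "P1 = (fst p, as1 @ [\<gamma>])"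
    define P2 where "P2 = (t \<gamma>, as2 @ [\<alpha>])"
    have Be: "pcomp A p = pcomp P2 P1" by (simp add: A_def P1_def P2_def pcomp_def sp)
    have Bp: "path (pcomp A p)" using p(4) bound_path by blast
    have "path (fst p, (as1 @ [\<gamma>]) @ (as2 @ [\<alpha>]))" using Bp by (simp add: pcomp_def A_def sp)
    from path_split[OF this] have P12: "path P1" "path P2" "ptgt t P1 = psrc P2"
      by (auto simp: P1_def P2_def psrc_def)
    have bP2: "bound P2" using bound_comp[of V Arr s t \<rho> P2 P1] p(4) Be P12 by simp
    have lens: "plen P1 + plen P2 = n + 1" using arg_cong[OF Be, of plen] p(3) plenA by simp
    have lP1: "plen P1 \<ge> 1" by (simp add: P1_def plen_def)
    have lP2: "plen P2 \<ge> 1" by (simp add: P2_def plen_def)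
    have psP2: "psrc P2 = v" using g by (simp add: P2_def psrc_def)
    have ptP2: "ptgt t P2 = j" by (simp add: P2_def ptgt_def al)
    have vV: "v \<in> V" using psrcV[OF P12(2)] psP2 by simp
    have vj: "v \<noteq> j" using acyc[OF P12(2)] psP2 ptP2 lP2 by auto
    obtain u where u: "u \<in> S" "(\<exists>m. u = (\<tau> ^^ m) v) \<or> (\<exists>m. u = (tinv ^^ m) v)"
      using orbit_rep[OF vV] by blast
    have "v \<in> S"
      using u(2)
    proof
      assume "\<exists>m. u = (\<tau> ^^ m) v"
      then obtain m where m: "u = (\<tau> ^^ m) v" by blast
      obtain U where U: "path U" "psrc U = u" "ptgt t U = v" using G1[OF vV, of m] m by blast
      have "path (pcomp P2 U)" using U P12 psP2 by (auto intro: is_path_pcomp)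
      moreover have "psrc (pcomp P2 U) \<in> S" using U u by simp
      moreover have "ptgt t (pcomp P2 U) \<in> S" using ptgt_pcomp[of t U P2] U psP2 ptP2 jS by simp
      ultimately have "pverts t (pcomp P2 U) \<subseteq> S" using convex by blast
      moreover have "v \<in> pverts t (pcomp P2 U)"
        using pverts_pcomp[of t U P2] U psP2 by (auto simp: pverts_def psrc_def)
      ultimately show "v \<in> S" by blast
    next
      assume "\<exists>m. u = (tinv ^^ m) v"
      then obtain m where m: "u = (tinv ^^ m) v" by blast
      show "v \<in> S"
      proof (cases m)
        case 0
        then show ?thesis using m u by simp
      next
        case (Suc m')
        obtain q where q: "path q" "psrc q = ptgt t P2" "plen q = n + 1 - plen P2" "bound (pcomp q P2)"
          using ND_left[OF st bP2] lens by auto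
        have "psrc (pcomp q P2) = \<tau> (ptgt t (pcomp q P2))"
          using stable_top[OF st q(4)] q(3) lens by simp
        then have tq: "v = \<tau> (ptgt t q)" using ptgt_pcomp[of t P2 q] q psP2 by simp
        have yV: "ptgt t q \<in> V" using ptgtV[OF q(1)] .
        have ty: "tinv v = ptgt t q" using tinv_eq[OF yV] tq by simp
        have "u = (tinv ^^ m') (tinv v)" unfolding m Suc funpow_Suc_right comp_def ..
        then have "u = (tinv ^^ m') (ptgt t q)" using ty by simp
        then obtain Y where Y: "path Y" "psrc Y = ptgt t q" "ptgt t Y = u" using G2[OF yV, of m'] by blast
        have pYq: "path (pcomp Y q)" using Y q by (auto intro: is_path_pcomp)
        have "plen (pcomp Y q) = 0"
          by (rule no_path_from_sink[OF sk pYq]) (use q ptP2 Y u ptgt_pcomp[of t q Y] in auto)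
        then show ?thesis using q lens lP1 by simp
      qed
    qed
    then show ?thesis using vj by simp
  qed
  then show ?thesis using p psp psA n0 by (intro exI[of _ p]) auto
qed


lemma K2:
  assumes sr: "is_source_of Arr s t S j" and al: "\<alpha> \<in> Arr" "s \<alpha> = j" "t \<alpha> \<in> S"
  shows "\<exists>P. path P \<and> psrc P = t \<alpha> \<and> ptgt t P = tinv j \<and> plen P = n \<and> 0 < n \<and> pverts t P \<subseteq> (S - {j}) \<union> {tinv j}"
proof -
  have jS: "j \<in> S" using sr by (simp add: is_source_of_def)
  define A where "A = (j, [\<alpha>])"
  have Ap: "path A" using al arrV by (auto simp add: A_def is_path_def)
  have plenA: "plen A = 1" by (simp add: A_def plen_def)
  have ptA: "ptgt t A = t \<alpha>" by (simp add: A_def ptgt_def)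
  have psA: "psrc A = j" by (simp add: A_def psrc_def)
  have Ab: "bound A" using bound_short[OF st Ap] plenA by simp
  obtain q where q: "path q" "psrc q = ptgt t A" "plen q = n" "bound (pcomp q A)"
    using ND_left[OF st Ab] plenA by auto
  have ptB: "ptgt t (pcomp q A) = ptgt t q" using ptgt_pcomp[of t A q] q ptA by simp
  have "j = \<tau> (ptgt t q)" using stable_top[OF st q(4)] q(3) plenA ptB psA by simp
  then have ptq: "ptgt t q = tinv j" using tinv_eq[OF ptgtV[OF q(1)]] by simp
  have n0: "0 < n"
  proof (rule ccontr)
    assume "\<not> 0 < n"
    then have "plen q = 0" using q by simp
    then have "ptgt t q = psrc q" by (simp add: ptgt_triv psrc_def)
    then have "tinv j = t \<alpha>" using q ptA ptq by simp
    then show False using al tinv_notin[OF jS] by simp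
  qed
  have "v \<in> (S - {j}) \<union> {tinv j}" if v: "v \<in> pverts t q" for v
  proof (cases "v = tinv j")
    case True
    then show ?thesis by simp
  next
    case False
    have fq: "fst q = t \<alpha>" using q ptA by (simp add: psrc_def)
    obtain \<gamma> where g: "\<gamma> \<in> set (\<alpha> # snd q)" "v = t \<gamma>" using v fq by (auto simp: pverts_def)
    then obtain bs1 bs2 where sp: "\<alpha> # snd q = bs1 @ \<gamma> # bs2" by (meson split_list)
    define B1 where "B1 = (j, bs1 @ [\<gamma>])"
    define B2 where "B2 = (t \<gamma>, bs2)"
    have Be: "pcomp q A = pcomp B2 B1" by (simp add: A_def B1_def B2_def pcomp_def sp[symmetric])
    have Bp: "path (pcomp q A)" using q(4) bound_path by blast
    have "path (j, (bs1 @ [\<gamma>]) @ bs2)" using Bp by (simp add: pcomp_def A_def sp[symmetric])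
    from path_split[OF this] have P12: "path B1" "path B2" "ptgt t B1 = psrc B2"
      by (auto simp: B1_def B2_def psrc_def)
    have bB1: "bound B1" using bound_comp[of V Arr s t \<rho> B2 B1] q(4) Be P12 by simp
    have lens: "plen B1 + plen B2 = n + 1" using arg_cong[OF Be, of plen] q(3) plenA by simp
    have lB1: "plen B1 \<ge> 1" by (simp add: B1_def plen_def)
    have psB1: "psrc B1 = j" by (simp add: B1_def psrc_def)
    have ptB1: "ptgt t B1 = v" using g by (simp add: B1_def ptgt_def)
    have vV: "v \<in> V" using ptgtV[OF P12(1)] ptB1 by simp
    have vj: "v \<noteq> j" using acyc[OF P12(1)] psB1 ptB1 lB1 by auto
    obtain u where u: "u \<in> S" "(\<exists>m. u = (\<tau> ^^ m) v) \<or> (\<exists>m. u = (tinv ^^ m) v)"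
      using orbit_rep[OF vV] by blast
    have "v \<in> S"
      using u(2)
    proof
      assume "\<exists>m. u = (tinv ^^ m) v"
      then obtain m where m: "u = (tinv ^^ m) v" by blast
      obtain Y where Y: "path Y" "psrc Y = v" "ptgt t Y = u" using G2[OF vV, of m] m by blast
      have "path (pcomp Y B1)" using Y P12 ptB1 by (auto intro: is_path_pcomp)
      moreover have "psrc (pcomp Y B1) \<in> S" using psB1 jS by simp
      moreover have "ptgt t (pcomp Y B1) \<in> S" using ptgt_pcomp[of t B1 Y] Y ptB1 u by simp
      ultimately have "pverts t (pcomp Y B1) \<subseteq> S" using convex by blast
      moreover have "v \<in> pverts t (pcomp Y B1)"
        using pverts_pcomp[of t B1 Y] Y ptB1 ptgt_in_pverts[of t B1] by auto
      ultimately show "v \<in> S" by blast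
    next
      assume "\<exists>m. u = (\<tau> ^^ m) v"
      then obtain m where m: "u = (\<tau> ^^ m) v" by blast
      show "v \<in> S"
      proof (cases m)
        case 0
        then show ?thesis using m u by simp
      next
        case (Suc m')
        have "plen B2 \<noteq> 0"
        proof
          assume "plen B2 = 0"
          then have "ptgt t B2 = psrc B2" by (simp add: ptgt_triv psrc_def)
          moreover have "ptgt t B2 = tinv j" using ptgt_pcomp[of t B1 B2] P12 Be ptB ptq by simp
          ultimately show False using False P12 ptB1 by simp
        qed
        then have lB1n: "plen B1 \<le> n + 1" using lens by simp
        obtain p where p: "path p" "ptgt t p = psrc B1" "plen p = n + 1 - plen B1" "bound (pcomp B1 p)"
          using ND_right[OF st bB1] lB1n by auto
        have "psrc (pcomp B1 p) = \<tau> (ptgt t (pcomp B1 p))"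
          using stable_top[OF st p(4)] p(3) lens by simp
        then have tp: "psrc p = \<tau> v" using ptgt_pcomp[of t p B1] p ptB1 by simp
        have "u = (\<tau> ^^ m') (\<tau> v)" unfolding m Suc funpow_Suc_right comp_def ..
        then obtain U where U: "path U" "psrc U = u" "ptgt t U = \<tau> v" using G1[OF tauV[OF vV], of m'] by blast
        have pUp: "path (pcomp p U)" using U p tp by (auto intro: is_path_pcomp)
        have "plen (pcomp p U) = 0"
          by (rule no_path_to_source[OF sr pUp]) (use p psB1 U u tp ptgt_pcomp[of t U p] in auto)
        then show ?thesis using p lens \<open>plen B2 \<noteq> 0\<close> by simp
      qed
    qed
    then show ?thesis using vj by simp
  qed
  then show ?thesis using q ptA ptq n0 by (intro exI[of _ q]) auto
qed

end

lemma path_snoc: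
  assumes "is_path V Arr s t (v, as @ [\<alpha>])"
  shows "is_path V Arr s t (v, as) \<and> \<alpha> \<in> Arr \<and> s \<alpha> = ptgt t (v, as) \<and> t \<alpha> = ptgt t (v, as @ [\<alpha>])"
  using assms by (auto simp: is_path_def chain_append ptgt_def)

lemma pverts_mono_snoc: "pverts t (v, as) \<subseteq> pverts t (v, as @ [\<alpha>])"
  by (auto simp: pverts_def)

lemma pverts_mono_Cons: "pverts t (t \<alpha>, as) \<subseteq> pverts t (v, \<alpha> # as)"
  by (auto simp: pverts_def)

definition cnt :: "('a \<Rightarrow> 'v) \<Rightarrow> 'v \<Rightarrow> ('v,'a) path list \<Rightarrow> nat" where
  "cnt t j w = length (filter (\<lambda>p. j \<in> pverts t p) w)"

context SL
begin

definition Inv :: "'v \<Rightarrow> 'v set \<Rightarrow> 'v \<Rightarrow> 'v \<Rightarrow> 'v \<Rightarrow> ('v,'a) path list \<Rightarrow> bool" where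
  "Inv j S' c i0 i w \<longleftrightarrow> prewalk V Arr s t w i0 i
     \<and> (\<forall>p\<in>set w. pverts t p \<subseteq> S' \<or> (pverts t p \<subseteq> S \<and> j \<in> pverts t p))
     \<and> (\<forall>p\<in>set w. plen p = 0 \<longrightarrow> fst p \<noteq> c)
     \<and> (\<forall>p\<in>set w. j \<in> pverts t p \<longrightarrow> 0 < plen p)"

lemma step1:
  assumes sk: "is_sink_of Arr s t S j" and ij: "i \<noteq> j"
    and inv: "Inv j ((S - {j}) \<union> {\<tau> j}) (\<tau> j) i0 i w" and c: "cnt t j w > 0"
  shows "\<exists>w'. Inv j ((S - {j}) \<union> {\<tau> j}) (\<tau> j) i0 i w' \<and> cnt t j w' < cnt t j w \<and> gr w' = gr w
     \<and> \<tau> j \<in> srcs True w' \<and> srcs True w \<subseteq> srcs True w'"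
proof -
  let ?S1 = "(S - {j}) \<union> {\<tau> j}"
  have jS: "j \<in> S" using sk by (simp add: is_sink_of_def)
  have tjS: "\<tau> j \<notin> S" using tau_notin[OF jS] .
  have jS1: "j \<notin> ?S1" using tjS jS by auto
  have pw: "prewalk V Arr s t w i0 i" using inv by (simp add: Inv_def)
  have J: "pverts t (w!k) \<subseteq> S \<and> ptgt t (w!k) = j \<and> 0 < plen (w!k) \<and> path (w!k)"
    if "k < length w" "j \<in> pverts t (w!k)" for k
  proof -
    have wk: "w!k \<in> set w" using that by simp
    then have "pverts t (w!k) \<subseteq> S" using inv that jS1 unfolding Inv_def by blast
    moreover have "path (w!k)" using pw wk by (simp add: prewalk_def)
    ultimately show ?thesis using sink_path[OF sk] that inv wk unfolding Inv_def by blast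
  qed
  obtain k where k: "k < length w" "j \<in> pverts t (w!k)"
    using c unfolding cnt_def by (metis filter_False in_set_conv_nth length_0_conv less_not_refl)
  have zzw: "zz t True w" using pw by (simp add: prewalk_def)
  obtain e where e: "even e" "e + 1 < length w" "j \<in> pverts t (w!e)" "j \<in> pverts t (w!(e+1))"
  proof (cases "even k")
    case True
    have "k + 1 < length w"
    proof (rule ccontr)
      assume "\<not> k + 1 < length w"
      then have "k = length w - 1" using k by simp
      moreover have "w \<noteq> []" using k by auto
      ultimately have "endv t w = j" using J[OF k] True k by (simp add: endv_def last_conv_nth)
      then show False using pw ij by (simp add: prewalk_def)
    qed
    moreover have "ptgt t (w!(k+1)) = j" using zzw J[OF k] True calculation unfolding zz_nth by auto
    ultimately show ?thesis using that[of k] True k ptgt_in_pverts by metis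
  next
    case False
    then obtain e where ke: "k = Suc e" by (cases k) auto
    have "ptgt t (w!e) = j" using zzw J[OF k] False k ke unfolding zz_nth by auto
    then show ?thesis using that[of e] False k ke ptgt_in_pverts by fastforce
  qed
  define xs where "xs = take e w"
  define p0 where "p0 = w!e"
  define p1 where "p1 = w!(e+1)"
  define ys where "ys = drop (e+2) w"
  have wd: "w = xs @ [p0,p1] @ ys" unfolding xs_def p0_def p1_def ys_def using list_dec2 e by blast
  have lxs: "length xs = e" using e by (simp add: xs_def)
  have Jp0: "pverts t p0 \<subseteq> S" "ptgt t p0 = j" "0 < plen p0" "path p0" using J e p0_def by auto
  have Jp1: "pverts t p1 \<subseteq> S" "ptgt t p1 = j" "0 < plen p1" "path p1" using J e p1_def by auto
  have dec: "\<exists>q \<alpha>. p = (fst q, snd q @ [\<alpha>]) \<and> path q \<and> \<alpha> \<in> Arr \<and> s \<alpha> = ptgt t q \<and> t \<alpha> = j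
          \<and> pverts t q \<subseteq> S - {j} \<and> s \<alpha> \<in> S \<and> plen p = Suc (plen q) \<and> psrc q = psrc p"
    if "pverts t p \<subseteq> S" "ptgt t p = j" "0 < plen p" "path p" for p
  proof -
    obtain v as where pe: "p = (v, as)" by (cases p)
    then have "as \<noteq> []" using that by (auto simp: plen_def)
    then obtain bs \<alpha> where asd: "as = bs @ [\<alpha>]" by (metis rev_exhaust)
    have ps: "path (v, bs) \<and> \<alpha> \<in> Arr \<and> s \<alpha> = ptgt t (v, bs) \<and> t \<alpha> = ptgt t (v, bs @ [\<alpha>])"
      using path_snoc that pe asd by metis
    have "pverts t (v, bs) \<subseteq> pverts t p" using pe asd pverts_mono_snoc[of t v bs \<alpha>] by simp
    then have sub: "pverts t (v, bs) \<subseteq> S" using that(1) by blast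
    have saS: "s \<alpha> \<in> S" using ps sub ptgt_in_pverts[of t "(v,bs)"] by auto
    have "j \<notin> pverts t (v, bs)"
    proof
      assume "j \<in> pverts t (v, bs)"
      then have "ptgt t (v, bs) = j" using sink_path[OF sk] ps sub by blast
      then show False using sk ps that pe asd unfolding is_sink_of_def by auto
    qed
    then show ?thesis using ps sub saS that pe asd
      by (intro exI[of _ "(v, bs)"] exI[of _ \<alpha>]) (auto simp: plen_def psrc_def)
  qed
  obtain q0 \<alpha> where q0: "p0 = (fst q0, snd q0 @ [\<alpha>])" "path q0" "\<alpha> \<in> Arr" "s \<alpha> = ptgt t q0" "t \<alpha> = j"
     "pverts t q0 \<subseteq> S - {j}" "s \<alpha> \<in> S" "plen p0 = Suc (plen q0)" "psrc q0 = psrc p0"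
    using dec[OF Jp0] by blast
  obtain q1 \<beta> where q1: "p1 = (fst q1, snd q1 @ [\<beta>])" "path q1" "\<beta> \<in> Arr" "s \<beta> = ptgt t q1" "t \<beta> = j"
     "pverts t q1 \<subseteq> S - {j}" "s \<beta> \<in> S" "plen p1 = Suc (plen q1)" "psrc q1 = psrc p1"
    using dec[OF Jp1] by blast
  obtain Pa where Pa: "path Pa" "psrc Pa = \<tau> j" "ptgt t Pa = s \<alpha>" "plen Pa = n" "0 < n" "pverts t Pa \<subseteq> ?S1"
    using K1[OF sk q0(3) q0(5) q0(7)] by blast
  obtain Pb where Pb: "path Pb" "psrc Pb = \<tau> j" "ptgt t Pb = s \<beta>" "plen Pb = n" "pverts t Pb \<subseteq> ?S1"
    using K1[OF sk q1(3) q1(5) q1(7)] by blast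
  define w' where "w' = xs @ [q0, Pa, Pb, q1] @ ys"
  have zo: "zz t True xs" "ys \<noteq> [] \<longrightarrow> psrc p1 = psrc (hd ys)" "zz t True ys"
     "xs \<noteq> [] \<longrightarrow> psrc (last xs) = psrc p0"
    using zzw wd e lxs by (auto simp: zz_append)
  have zn: "zz t True w'" unfolding w'_def using zo e lxs Pa Pb q0 q1 by (auto simp: zz_append)
  have pw': "prewalk V Arr s t w' i0 i"
  proof -
    have "\<forall>p\<in>set w'. path p" using pw wd q0 q1 Pa Pb unfolding w'_def prewalk_def by auto
    moreover have "psrc (hd w') = i0" using pw wd q0 unfolding w'_def prewalk_def by (cases xs) auto
    moreover have "i = endv t w'" using pw wd q1 lxs e unfolding w'_def prewalk_def
      by (cases "ys = []") (auto simp: endv_append)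
    ultimately show ?thesis using zn by (simp add: prewalk_def w'_def)
  qed
  have setw: "set w = set xs \<union> {p0, p1} \<union> set ys" using wd by auto
  have setw': "set w' = set xs \<union> {q0, Pa, Pb, q1} \<union> set ys" unfolding w'_def by auto
  have q0S1: "pverts t q0 \<subseteq> ?S1" "pverts t q1 \<subseteq> ?S1" using q0 q1 by auto
  have q0j: "j \<notin> pverts t q0" "j \<notin> pverts t q1" "j \<notin> pverts t Pa" "j \<notin> pverts t Pb"
    using q0 q1 Pa Pb jS1 by auto
  have fq: "fst q0 \<noteq> \<tau> j" "fst q1 \<noteq> \<tau> j"
    using q0(6) q1(6) tjS by (auto simp: pverts_def)
  have inv': "Inv j ?S1 (\<tau> j) i0 i w'"
    unfolding Inv_def using pw' inv setw setw' q0S1 q0j fq Pa Pb unfolding Inv_def by auto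
  have "cnt t j w' = cnt t j xs + cnt t j ys" unfolding w'_def cnt_def using q0j by simp
  moreover have "cnt t j w = cnt t j xs + 2 + cnt t j ys"
  proof -
    have "j \<in> pverts t p0" "j \<in> pverts t p1" using e p0_def p1_def by auto
    then have "cnt t j (xs @ [p0,p1] @ ys) = cnt t j xs + 2 + cnt t j ys" by (simp add: cnt_def)
    then show ?thesis using wd by simp
  qed
  ultimately have cl: "cnt t j w' < cnt t j w" by simp
  have gl: "gr w' = gr w" unfolding w'_def using wd q0 q1 Pa Pb by (simp add: gr_append)
  have sl1: "\<tau> j \<in> srcs True w'" unfolding w'_def using e lxs Pa by (simp add: srcs_append)
  have sl2: "srcs True w \<subseteq> srcs True w'"
    using wd e lxs q1 unfolding w'_def by (auto simp: srcs_append)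
  show ?thesis using inv' cl gl sl1 sl2 by blast
qed


lemma step2:
  assumes sr: "is_source_of Arr s t S j" and ij: "i \<noteq> j" and i0j: "i0 \<noteq> j"
    and inv: "Inv j ((S - {j}) \<union> {tinv j}) (tinv j) i0 i w" and c: "cnt t j w > 0"
  shows "\<exists>w'. Inv j ((S - {j}) \<union> {tinv j}) (tinv j) i0 i w' \<and> cnt t j w' < cnt t j w \<and> gr w' = gr w
     \<and> tinv j \<in> snks t True w' \<and> snks t True w \<subseteq> snks t True w'"
proof -
  let ?S1 = "(S - {j}) \<union> {tinv j}"
  have jS: "j \<in> S" using sr by (simp add: is_source_of_def)
  have tjS: "tinv j \<notin> S" using tinv_notin[OF jS] .
  have jS1: "j \<notin> ?S1" using tjS jS by auto
  have pw: "prewalk V Arr s t w i0 i" using inv by (simp add: Inv_def)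
  have J: "pverts t (w!k) \<subseteq> S \<and> psrc (w!k) = j \<and> 0 < plen (w!k) \<and> path (w!k)"
    if "k < length w" "j \<in> pverts t (w!k)" for k
  proof -
    have wk: "w!k \<in> set w" using that by simp
    then have "pverts t (w!k) \<subseteq> S" using inv that jS1 unfolding Inv_def by blast
    moreover have "path (w!k)" using pw wk by (simp add: prewalk_def)
    ultimately show ?thesis using source_path[OF sr] that inv wk unfolding Inv_def by blast
  qed
  obtain k where k: "k < length w" "j \<in> pverts t (w!k)"
    using c unfolding cnt_def by (metis filter_False in_set_conv_nth length_0_conv less_not_refl)
  have zzw: "zz t True w" using pw by (simp add: prewalk_def)
  have k0: "k \<noteq> 0"
  proof
    assume "k = 0"
    then have "psrc (hd w) = j" using J[OF k] k by (simp add: hd_conv_nth)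
    then show False using pw i0j by (simp add: prewalk_def)
  qed
  obtain e where e: "odd e" "e + 1 < length w" "j \<in> pverts t (w!e)" "j \<in> pverts t (w!(e+1))"
  proof (cases "odd k")
    case True
    have "k + 1 < length w"
    proof (rule ccontr)
      assume "\<not> k + 1 < length w"
      then have "k = length w - 1" using k by simp
      moreover have "w \<noteq> []" using k by auto
      ultimately have "endv t w = j" using J[OF k] True k by (simp add: endv_def last_conv_nth)
      then show False using pw ij by (simp add: prewalk_def)
    qed
    moreover have "psrc (w!(k+1)) = j" using zzw J[OF k] True calculation unfolding zz_nth by auto
    ultimately show ?thesis using that[of k] True k by (auto simp: pverts_def psrc_def)
  next
    case False
    then obtain e where ke: "k = Suc e" using k0 by (cases k) auto
    have "psrc (w!e) = j" using zzw J[OF k] False k ke unfolding zz_nth by auto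
    then show ?thesis using that[of e] False k ke by (auto simp: pverts_def psrc_def)
  qed
  define xs where "xs = take e w"
  define p0 where "p0 = w!e"
  define p1 where "p1 = w!(e+1)"
  define ys where "ys = drop (e+2) w"
  have wd: "w = xs @ [p0,p1] @ ys" unfolding xs_def p0_def p1_def ys_def using list_dec2 e by blast
  have lxs: "length xs = e" using e by (simp add: xs_def)
  have Jp0: "pverts t p0 \<subseteq> S" "psrc p0 = j" "0 < plen p0" "path p0" using J e p0_def by auto
  have Jp1: "pverts t p1 \<subseteq> S" "psrc p1 = j" "0 < plen p1" "path p1" using J e p1_def by auto
  have dec: "\<exists>q \<alpha>. p = (s \<alpha>, \<alpha> # snd q) \<and> fst q = t \<alpha> \<and> path q \<and> \<alpha> \<in> Arr \<and> s \<alpha> = j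
          \<and> pverts t q \<subseteq> S - {j} \<and> t \<alpha> \<in> S \<and> plen p = Suc (plen q) \<and> ptgt t q = ptgt t p"
    if "pverts t p \<subseteq> S" "psrc p = j" "0 < plen p" "path p" for p
  proof -
    obtain v as where pe: "p = (v, as)" by (cases p)
    then have "as \<noteq> []" using that by (auto simp: plen_def)
    then obtain \<alpha> bs where asd: "as = \<alpha> # bs" by (cases as) auto
    have ps: "\<alpha> \<in> Arr" "s \<alpha> = v" "chain s t (t \<alpha>) bs" "set bs \<subseteq> Arr"
      using that pe asd by (auto simp: is_path_def)
    have qp: "path (t \<alpha>, bs)" using ps arrV by (simp add: is_path_def)
    have "pverts t (t \<alpha>, bs) \<subseteq> pverts t p" using pe asd pverts_mono_Cons[of t \<alpha> bs v] by simp
    then have sub: "pverts t (t \<alpha>, bs) \<subseteq> S" using that(1) by blast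
    have taS: "t \<alpha> \<in> S" using sub by (auto simp: pverts_def)
    have vj: "v = j" using that pe by (simp add: psrc_def)
    have "j \<notin> pverts t (t \<alpha>, bs)"
    proof
      assume "j \<in> pverts t (t \<alpha>, bs)"
      then have "psrc (t \<alpha>, bs) = j" using source_path[OF sr] qp sub by blast
      then show False using sr ps vj jS unfolding is_source_of_def by (auto simp: psrc_def)
    qed
    then show ?thesis using ps sub taS that pe asd vj qp
      by (intro exI[of _ "(t \<alpha>, bs)"] exI[of _ \<alpha>]) (auto simp: plen_def ptgt_Cons)
  qed
  obtain q0 \<alpha> where q0: "p0 = (s \<alpha>, \<alpha> # snd q0)" "fst q0 = t \<alpha>" "path q0" "\<alpha> \<in> Arr" "s \<alpha> = j"
     "pverts t q0 \<subseteq> S - {j}" "t \<alpha> \<in> S" "plen p0 = Suc (plen q0)" "ptgt t q0 = ptgt t p0"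
    using dec[OF Jp0] by blast
  obtain q1 \<beta> where q1: "p1 = (s \<beta>, \<beta> # snd q1)" "fst q1 = t \<beta>" "path q1" "\<beta> \<in> Arr" "s \<beta> = j"
     "pverts t q1 \<subseteq> S - {j}" "t \<beta> \<in> S" "plen p1 = Suc (plen q1)" "ptgt t q1 = ptgt t p1"
    using dec[OF Jp1] by blast
  obtain Pa where Pa: "path Pa" "psrc Pa = t \<alpha>" "ptgt t Pa = tinv j" "plen Pa = n" "0 < n" "pverts t Pa \<subseteq> ?S1"
    using K2[OF sr q0(4) q0(5) q0(7)] by blast
  obtain Pb where Pb: "path Pb" "psrc Pb = t \<beta>" "ptgt t Pb = tinv j" "plen Pb = n" "pverts t Pb \<subseteq> ?S1"
    using K2[OF sr q1(4) q1(5) q1(7)] by blast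
  have psq: "psrc q0 = t \<alpha>" "psrc q1 = t \<beta>" using q0 q1 by (auto simp: psrc_def)
  define w' where "w' = xs @ [q0, Pa, Pb, q1] @ ys"
  have xsne: "xs \<noteq> []" using lxs e by auto
  have zo: "zz t True xs" "ys \<noteq> [] \<longrightarrow> ptgt t p1 = ptgt t (hd ys)" "zz t False ys"
     "ptgt t (last xs) = ptgt t p0"
    using zzw wd e lxs xsne by (auto simp: zz_append)
  have zn: "zz t True w'" unfolding w'_def using zo e lxs Pa Pb q0 q1 xsne psq by (auto simp: zz_append)
  have pw': "prewalk V Arr s t w' i0 i"
  proof -
    have "\<forall>p\<in>set w'. path p" using pw wd q0 q1 Pa Pb unfolding w'_def prewalk_def by auto
    moreover have "psrc (hd w') = i0" using pw wd xsne unfolding w'_def prewalk_def by simp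
    moreover have "i = endv t w'" using pw wd q1 lxs e unfolding w'_def prewalk_def
      by (cases "ys = []") (auto simp: endv_append)
    ultimately show ?thesis using zn by (simp add: prewalk_def w'_def)
  qed
  have setw: "set w = set xs \<union> {p0, p1} \<union> set ys" using wd by auto
  have setw': "set w' = set xs \<union> {q0, Pa, Pb, q1} \<union> set ys" unfolding w'_def by auto
  have q0S1: "pverts t q0 \<subseteq> ?S1" "pverts t q1 \<subseteq> ?S1" using q0 q1 by auto
  have q0j: "j \<notin> pverts t q0" "j \<notin> pverts t q1" "j \<notin> pverts t Pa" "j \<notin> pverts t Pb"
    using q0 q1 Pa Pb jS1 by auto
  have fq: "fst q0 \<noteq> tinv j" "fst q1 \<noteq> tinv j"
    using q0(6) q1(6) tjS by (auto simp: pverts_def)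
  have inv': "Inv j ?S1 (tinv j) i0 i w'"
    unfolding Inv_def using pw' inv setw setw' q0S1 q0j fq Pa Pb unfolding Inv_def by auto
  have "cnt t j w' = cnt t j xs + cnt t j ys" unfolding w'_def cnt_def using q0j by simp
  moreover have "cnt t j w = cnt t j xs + 2 + cnt t j ys"
  proof -
    have "j \<in> pverts t p0" "j \<in> pverts t p1" using e p0_def p1_def by auto
    then have "cnt t j (xs @ [p0,p1] @ ys) = cnt t j xs + 2 + cnt t j ys" by (simp add: cnt_def)
    then show ?thesis using wd by simp
  qed
  ultimately have cl: "cnt t j w' < cnt t j w" by simp
  have gl: "gr w' = gr w" unfolding w'_def using wd q0 q1 Pa Pb by (simp add: gr_append)
  have sl1: "tinv j \<in> snks t True w'" unfolding w'_def using e lxs Pa by (simp add: snks_append)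
  have sl2: "snks t True w \<subseteq> snks t True w'"
    using wd e lxs q1 unfolding w'_def by (auto simp: snks_append)
  show ?thesis using inv' cl gl sl1 sl2 by blast
qed


lemma iter1:
  assumes sk: "is_sink_of Arr s t S j" and ij: "i \<noteq> j"
    and inv: "Inv j ((S - {j}) \<union> {\<tau> j}) (\<tau> j) i0 i w"
  shows "\<exists>w'. Inv j ((S - {j}) \<union> {\<tau> j}) (\<tau> j) i0 i w' \<and> cnt t j w' = 0 \<and> gr w' = gr w
     \<and> (cnt t j w > 0 \<or> \<tau> j \<in> srcs True w \<longrightarrow> \<tau> j \<in> srcs True w')"
  using inv
proof (induction "cnt t j w" arbitrary: w rule: less_induct)
  case less
  show ?case
  proof (cases "cnt t j w = 0")
    case True
    then show ?thesis using less.prems by (intro exI[of _ w]) simp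
  next
    case False
    then obtain w1 where w1: "Inv j ((S - {j}) \<union> {\<tau> j}) (\<tau> j) i0 i w1" "cnt t j w1 < cnt t j w" "gr w1 = gr w"
      "\<tau> j \<in> srcs True w1" "srcs True w \<subseteq> srcs True w1"
      using step1[OF sk ij less.prems] by blast
    obtain w2 where "Inv j ((S - {j}) \<union> {\<tau> j}) (\<tau> j) i0 i w2" "cnt t j w2 = 0" "gr w2 = gr w1"
      "(cnt t j w1 > 0 \<or> \<tau> j \<in> srcs True w1 \<longrightarrow> \<tau> j \<in> srcs True w2)"
      using less.hyps[OF w1(2) w1(1)] by blast
    then show ?thesis using w1 by (intro exI[of _ w2]) auto
  qed
qed

lemma iter2:
  assumes sr: "is_source_of Arr s t S j" and ij: "i \<noteq> j" and i0j: "i0 \<noteq> j"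
    and inv: "Inv j ((S - {j}) \<union> {tinv j}) (tinv j) i0 i w"
  shows "\<exists>w'. Inv j ((S - {j}) \<union> {tinv j}) (tinv j) i0 i w' \<and> cnt t j w' = 0 \<and> gr w' = gr w
     \<and> (cnt t j w > 0 \<or> tinv j \<in> snks t True w \<longrightarrow> tinv j \<in> snks t True w')"
  using inv
proof (induction "cnt t j w" arbitrary: w rule: less_induct)
  case less
  show ?case
  proof (cases "cnt t j w = 0")
    case True
    then show ?thesis using less.prems by (intro exI[of _ w]) simp
  next
    case False
    then obtain w1 where w1: "Inv j ((S - {j}) \<union> {tinv j}) (tinv j) i0 i w1" "cnt t j w1 < cnt t j w" "gr w1 = gr w"
      "tinv j \<in> snks t True w1" "snks t True w \<subseteq> snks t True w1"
      using step2[OF sr ij i0j less.prems] by blast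
    obtain w2 where "Inv j ((S - {j}) \<union> {tinv j}) (tinv j) i0 i w2" "cnt t j w2 = 0" "gr w2 = gr w1"
      "(cnt t j w1 > 0 \<or> tinv j \<in> snks t True w1 \<longrightarrow> tinv j \<in> snks t True w2)"
      using less.hyps[OF w1(2) w1(1)] by blast
    then show ?thesis using w1 by (intro exI[of _ w2]) auto
  qed
qed

lemma init_inv:
  assumes w: "walk_in V Arr s t S w i0 i" and ij: "i \<noteq> j" and i0j: "i0 \<noteq> j" and jS: "j \<in> S"
    and cS: "c \<notin> S"
  shows "Inv j ((S - {j}) \<union> {c}) c i0 i w"
proof -
  have iw: "is_walk V Arr s t w i0 i" and pv: "\<forall>p\<in>set w. pverts t p \<subseteq> S" using w by (auto simp: walk_in_def)
  have pw: "prewalk V Arr s t w i0 i" and mp: "midpos w" using iw by (auto simp: is_walk_iff)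
  have A: "\<forall>p\<in>set w. pverts t p \<subseteq> (S - {j}) \<union> {c} \<or> (pverts t p \<subseteq> S \<and> j \<in> pverts t p)"
    using pv by blast
  have B: "\<forall>p\<in>set w. plen p = 0 \<longrightarrow> fst p \<noteq> c"
    using pv cS by (auto simp: pverts_def)
  have C: "0 < plen p" if p: "p \<in> set w" "j \<in> pverts t p" for p
  proof (rule ccontr)
    assume "\<not> 0 < plen p"
    then have p0: "plen p = 0" by simp
    then have fp: "fst p = j" using p by (auto simp: pverts_def plen_def)
    obtain k where k: "k < length w" "w!k = p" using p by (meson in_set_conv_nth)
    have wne: "w \<noteq> []" using k by auto
    show False
    proof (cases "k = 0")
      case True
      then have "psrc (hd w) = j" using k fp wne by (simp add: hd_conv_nth psrc_def)
      then show False using pw i0j by (simp add: prewalk_def)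
    next
      case False
      show False
      proof (cases "k = length w - 1")
        case True
        then have "last w = p" using k wne by (simp add: last_conv_nth)
        then have "endv t w = j" using fp p0 by (simp add: endv_def ptgt_triv psrc_def)
        then show False using pw ij by (simp add: prewalk_def)
      next
        case False
        then have "0 < plen (w!k)" using mp \<open>k \<noteq> 0\<close> k unfolding midpos_def by auto
        then show False using k p0 by simp
      qed
    qed
  qed
  show ?thesis using pw A B C by (simp add: Inv_def)
qed

lemma final1:
  assumes sk: "is_sink_of Arr s t S j" and w: "walk_in V Arr s t S w i0 i" and js: "j \<in> walk_sinks t w"
    and ij: "i \<noteq> j" and i0j: "i0 \<noteq> j"
  shows "\<exists>w'. walk_in V Arr s t ((S - {j}) \<union> {\<tau> j}) w' i0 i \<and> \<tau> j \<in> walk_sources w'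
                 \<and> walk_grade w = walk_grade w'"
proof -
  have jS: "j \<in> S" using sk by (simp add: is_sink_of_def)
  have inv: "Inv j ((S - {j}) \<union> {\<tau> j}) (\<tau> j) i0 i w"
    using init_inv[OF w ij i0j jS tau_notin[OF jS]] .
  have c: "cnt t j w > 0"
  proof -
    obtain h where "2 * h + 1 < length w" "j = ptgt t (w ! (2 * h))" using js by (auto simp: walk_sinks_def)
    then have "w ! (2*h) \<in> set w" "j \<in> pverts t (w ! (2*h))" using ptgt_in_pverts[of t "w ! (2*h)"] by auto
    then have "filter (\<lambda>p. j \<in> pverts t p) w \<noteq> []" by (auto simp: filter_empty_conv)
    then show ?thesis unfolding cnt_def by simp
  qed
  obtain w1 where w1: "Inv j ((S - {j}) \<union> {\<tau> j}) (\<tau> j) i0 i w1" "cnt t j w1 = 0" "gr w1 = gr w"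
    "\<tau> j \<in> srcs True w1"
    using iter1[OF sk ij inv] c by blast
  have pv: "\<forall>p\<in>set w1. pverts t p \<subseteq> (S - {j}) \<union> {\<tau> j}"
  proof
    fix p assume p: "p \<in> set w1"
    have "j \<notin> pverts t p" using w1(2) p unfolding cnt_def by (auto simp: filter_empty_conv)
    then show "pverts t p \<subseteq> (S - {j}) \<union> {\<tau> j}" using w1(1) p unfolding Inv_def by blast
  qed
  obtain w2 where w2: "prewalk V Arr s t w2 i0 i" "midpos w2" "\<forall>p\<in>set w2. pverts t p \<subseteq> (S - {j}) \<union> {\<tau> j}"
    "gr w2 = gr w1" "\<tau> j \<in> srcs True w1 \<longrightarrow> \<tau> j \<in> srcs True w2"
    using normalize[of V Arr s t w1 i0 i "(S - {j}) \<union> {\<tau> j}" "\<tau> j"] w1(1) pv unfolding Inv_def by blast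
  show ?thesis using w2 w1
    by (intro exI[of _ w2]) (simp add: walk_in_def is_walk_iff walk_sources_srcs walk_grade_gr)
qed

lemma final2:
  assumes sr: "is_source_of Arr s t S j" and w: "walk_in V Arr s t S w i0 i" and js: "j \<in> walk_sources w"
    and ij: "i \<noteq> j" and i0j: "i0 \<noteq> j"
  shows "\<exists>w'. walk_in V Arr s t ((S - {j}) \<union> {tinv j}) w' i0 i \<and> tinv j \<in> walk_sinks t w'
                 \<and> walk_grade w = walk_grade w'"
proof -
  have jS: "j \<in> S" using sr by (simp add: is_source_of_def)
  have inv: "Inv j ((S - {j}) \<union> {tinv j}) (tinv j) i0 i w"
    using init_inv[OF w ij i0j jS tinv_notin[OF jS]] .
  have c: "cnt t j w > 0"
  proof -
    obtain h where "2 * h + 2 < length w" "j = psrc (w ! (2 * h + 1))" using js by (auto simp: walk_sources_def)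
    then have "w ! (2*h+1) \<in> set w" "j \<in> pverts t (w ! (2*h+1))" by (auto simp: pverts_def psrc_def)
    then have "filter (\<lambda>p. j \<in> pverts t p) w \<noteq> []" by (auto simp: filter_empty_conv)
    then show ?thesis unfolding cnt_def by simp
  qed
  obtain w1 where w1: "Inv j ((S - {j}) \<union> {tinv j}) (tinv j) i0 i w1" "cnt t j w1 = 0" "gr w1 = gr w"
    "tinv j \<in> snks t True w1"
    using iter2[OF sr ij i0j inv] c by blast
  have pv: "\<forall>p\<in>set w1. pverts t p \<subseteq> (S - {j}) \<union> {tinv j}"
  proof
    fix p assume p: "p \<in> set w1"
    have "j \<notin> pverts t p" using w1(2) p unfolding cnt_def by (auto simp: filter_empty_conv)
    then show "pverts t p \<subseteq> (S - {j}) \<union> {tinv j}" using w1(1) p unfolding Inv_def by blast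
  qed
  obtain w2 where w2: "prewalk V Arr s t w2 i0 i" "midpos w2" "\<forall>p\<in>set w2. pverts t p \<subseteq> (S - {j}) \<union> {tinv j}"
    "gr w2 = gr w1" "tinv j \<in> snks t True w1 \<longrightarrow> tinv j \<in> snks t True w2"
    using normalize[of V Arr s t w1 i0 i "(S - {j}) \<union> {tinv j}" "tinv j"] w1(1) pv unfolding Inv_def by blast
  show ?thesis using w2 w1
    by (intro exI[of _ w2]) (simp add: walk_in_def is_walk_iff walk_sinks_snks walk_grade_gr)
qed

end


theorem lemma4p3:
  fixes V :: "'v set" and Arr :: "'a set" and s t :: "'a \<Rightarrow> 'v"
    and \<rho> :: "(('v,'a) path \<Rightarrow> 'k::field) set" and n :: nat and \<tau> :: "'v \<Rightarrow> 'v"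
    and S :: "'v set" and i i0 j :: 'v
  assumes "stable_ntq V Arr s t \<rho> n \<tau>"
    and "acyclic_quiver V Arr s t"
    and "finite (tau_orbit V \<tau> ` V)"
    and "complete_tau_slice V Arr s t \<tau> S"
    and "i \<in> S" and "i0 \<in> S" and "j \<in> S" and "i \<noteq> j" and "i0 \<noteq> j"
  shows "(\<forall>w. is_sink_of Arr s t S j \<and> walk_in V Arr s t S w i0 i \<and> j \<in> walk_sinks t w \<longrightarrow>
           (\<exists>w'. walk_in V Arr s t ((S - {j}) \<union> {\<tau> j}) w' i0 i \<and> \<tau> j \<in> walk_sources w'
                 \<and> walk_grade w = walk_grade w'))
       \<and> (\<forall>w. is_source_of Arr s t S j \<and> walk_in V Arr s t S w i0 i \<and> j \<in> walk_sources w \<longrightarrow>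
           (\<exists>w'. walk_in V Arr s t ((S - {j}) \<union> {tau_inv V \<tau> j}) w' i0 i
                 \<and> tau_inv V \<tau> j \<in> walk_sinks t w' \<and> walk_grade w = walk_grade w'))"
proof -
  interpret SL V Arr s t \<rho> n \<tau> S
    using assms(1,2,4) by unfold_locales
  show ?thesis
  proof (intro conjI allI impI)
    fix w assume "is_sink_of Arr s t S j \<and> walk_in V Arr s t S w i0 i \<and> j \<in> walk_sinks t w"
    then show "\<exists>w'. walk_in V Arr s t ((S - {j}) \<union> {\<tau> j}) w' i0 i \<and> \<tau> j \<in> walk_sources w'
                 \<and> walk_grade w = walk_grade w'"
      using final1 assms(8,9) by blast
  next
    fix w assume "is_source_of Arr s t S j \<and> walk_in V Arr s t S w i0 i \<and> j \<in> walk_sources w"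
    then show "\<exists>w'. walk_in V Arr s t ((S - {j}) \<union> {tau_inv V \<tau> j}) w' i0 i
                 \<and> tau_inv V \<tau> j \<in> walk_sinks t w' \<and> walk_grade w = walk_grade w'"
      using final2 assms(8,9) by blast
  qed
qed

end
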